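(* For $n\ge3$, $\mathfrak a_{15}(n)$ equals the real span of $\{iP\}$ over all length-$n$ Pauli strings $P\notin\{I^{\otimes n},X_1\}$ whose first tensor factor is $I$ or $X$. Consequently $\mathfrak a_{15}(n)\cong\mathfrak{su}(2^{n-1})\oplus\mathfrak{su}(2^{n-1})$.
   Context: Pauli matrices $I,X,Y,Z$; $X_1=X\otimes I^{\otimes(n-1)}$; $A_jB_{j+1}$ denotes the length-$n$ Pauli string with $A$ at position $j$, $B$ at $j+1$, $I$ elsewhere. $\mathfrak{su}(N)$ is the Lie algebra of traceless skew-Hermitian matrices; $\oplus$ denotes a direct sum of commuting subalgebras. For a set $S$ of Pauli strings, $\mathrm{Lie}\langle S\rangle$ is the smallest real Lie subalgebra of $\mathfrak u(2^n)$ containing $\{iP:P\in S\}$. $\mathfrak a_{15}(n)=\mathrm{Lie}\langle X_jX_{j+1},X_jY_{j+1},X_jZ_{j+1}:1\le j\le n-1\rangle$. *)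

theory Defs
  imports Complex_Main "Jordan_Normal_Form.Matrix"
begin

datatype pauli = PI | PX | PY | PZ

definition pauli_mat :: "pauli \<Rightarrow> complex mat" where
  "pauli_mat p = (case p of
      PI \<Rightarrow> mat 2 2 (\<lambda>(i,j). if i = j then 1 else 0)
    | PX \<Rightarrow> mat 2 2 (\<lambda>(i,j). if i \<noteq> j then 1 else 0)
    | PY \<Rightarrow> mat 2 2 (\<lambda>(i,j). if i = 0 \<and> j = 1 then - \<i> else if i = 1 \<and> j = 0 then \<i> else 0)
    | PZ \<Rightarrow> mat 2 2 (\<lambda>(i,j). if i = j then (if i = 0 then 1 else -1) else 0))"

text \<open>Kronecker (tensor) product; the first factor is the most significant one.\<close>
definition kron :: "complex mat \<Rightarrow> complex mat \<Rightarrow> complex mat" where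
  "kron A B = mat (dim_row A * dim_row B) (dim_col A * dim_col B)
     (\<lambda>(i,j). A $$ (i div dim_row B, j div dim_col B) * B $$ (i mod dim_row B, j mod dim_col B))"

definition pstring_mat :: "pauli list \<Rightarrow> complex mat" where
  "pstring_mat ps = foldr (\<lambda>p M. kron (pauli_mat p) M) ps (1\<^sub>m 1)"

definition two_site :: "nat \<Rightarrow> nat \<Rightarrow> pauli \<Rightarrow> pauli \<Rightarrow> pauli list" where
  "two_site n j A B = map (\<lambda>k. if k = j then A else if k = j + 1 then B else PI) [1..<n+1]"

definition comm :: "complex mat \<Rightarrow> complex mat \<Rightarrow> complex mat" where
  "comm A B = A * B - B * A"

inductive_set lie_closure :: "nat \<Rightarrow> complex mat set \<Rightarrow> complex mat set"
  for N :: nat and S :: "complex mat set" where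
  gen: "x \<in> S \<Longrightarrow> x \<in> lie_closure N S"
| zero: "0\<^sub>m N N \<in> lie_closure N S"
| add: "x \<in> lie_closure N S \<Longrightarrow> y \<in> lie_closure N S \<Longrightarrow> x + y \<in> lie_closure N S"
| smult: "x \<in> lie_closure N S \<Longrightarrow> complex_of_real r \<cdot>\<^sub>m x \<in> lie_closure N S"
| bracket: "x \<in> lie_closure N S \<Longrightarrow> y \<in> lie_closure N S \<Longrightarrow> comm x y \<in> lie_closure N S"

inductive_set real_span_mat :: "nat \<Rightarrow> complex mat set \<Rightarrow> complex mat set"
  for N :: nat and S :: "complex mat set" where
  gen: "x \<in> S \<Longrightarrow> x \<in> real_span_mat N S"
| zero: "0\<^sub>m N N \<in> real_span_mat N S"
| add: "x \<in> real_span_mat N S \<Longrightarrow> y \<in> real_span_mat N S \<Longrightarrow> x + y \<in> real_span_mat N S"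
| smult: "x \<in> real_span_mat N S \<Longrightarrow> complex_of_real r \<cdot>\<^sub>m x \<in> real_span_mat N S"

definition a15 :: "nat \<Rightarrow> complex mat set" where
  "a15 n = lie_closure (2^n)
     {\<i> \<cdot>\<^sub>m pstring_mat (two_site n j PX B) | j B. 1 \<le> j \<and> j \<le> n - 1 \<and> B \<in> {PX, PY, PZ}}"

definition ctrans :: "complex mat \<Rightarrow> complex mat" where
  "ctrans A = mat (dim_col A) (dim_row A) (\<lambda>(i,j). cnj (A $$ (j,i)))"

definition mtrace :: "complex mat \<Rightarrow> complex" where
  "mtrace A = (\<Sum>i<dim_row A. A $$ (i,i))"

definition su :: "nat \<Rightarrow> complex mat set" where
  "su N = {A \<in> carrier_mat N N. ctrans A = - A \<and> mtrace A = 0}"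

definition lie_iso_sum :: "(complex mat \<Rightarrow> complex mat \<times> complex mat) \<Rightarrow> complex mat set
     \<Rightarrow> complex mat set \<Rightarrow> complex mat set \<Rightarrow> bool" where
  "lie_iso_sum f L M1 M2 \<longleftrightarrow> bij_betw f L (M1 \<times> M2)
     \<and> (\<forall>x\<in>L. \<forall>y\<in>L. f (x + y) = (fst (f x) + fst (f y), snd (f x) + snd (f y)))
     \<and> (\<forall>x\<in>L. \<forall>r::real. f (complex_of_real r \<cdot>\<^sub>m x)
            = (complex_of_real r \<cdot>\<^sub>m fst (f x), complex_of_real r \<cdot>\<^sub>m snd (f x)))
     \<and> (\<forall>x\<in>L. \<forall>y\<in>L. f (comm x y) = (comm (fst (f x)) (fst (f y)), comm (snd (f x)) (snd (f y))))"

end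

theory Submission
  imports Defs
begin


fun pm :: "pauli \<Rightarrow> pauli \<Rightarrow> pauli" where
  "pm PI q = q"
| "pm p PI = p"
| "pm PX PX = PI" | "pm PX PY = PZ" | "pm PX PZ = PY"
| "pm PY PX = PZ" | "pm PY PY = PI" | "pm PY PZ = PX"
| "pm PZ PX = PY" | "pm PZ PY = PX" | "pm PZ PZ = PI"

fun ph :: "pauli \<Rightarrow> pauli \<Rightarrow> complex" where
  "ph PX PY = \<i>" | "ph PY PX = - \<i>"
| "ph PY PZ = \<i>" | "ph PZ PY = - \<i>"
| "ph PZ PX = \<i>" | "ph PX PZ = - \<i>"
| "ph _ _ = 1"

definition anti :: "pauli \<Rightarrow> pauli \<Rightarrow> bool" where
  "anti p q \<longleftrightarrow> p \<noteq> PI \<and> q \<noteq> PI \<and> p \<noteq> q"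

lemma less2: "(i::nat) < 2 \<Longrightarrow> i = 0 \<or> i = 1" by auto

lemma pauli_carrier[simp]: "pauli_mat p \<in> carrier_mat 2 2"
  by (cases p) (auto simp: pauli_mat_def)

lemma pauli_dims[simp]: "dim_row (pauli_mat p) = 2" "dim_col (pauli_mat p) = 2"
  by (cases p; simp add: pauli_mat_def)+

lemma sum2: "(\<Sum>k = 0..<2. f k) = f 0 + (f (1::nat)::complex)"
  by (simp add: numeral_2_eq_2)

lemma pauli_mult: "pauli_mat p * pauli_mat q = ph p q \<cdot>\<^sub>m pauli_mat (pm p q)"
  apply (rule eq_matI)
   apply (simp add: index_mult_mat)
   apply (cases p; cases q; auto simp: pauli_mat_def scalar_prod_def sum2 dest!: less2)
  apply simp_all
  done

lemma kron_dims[simp]: "dim_row (kron A B) = dim_row A * dim_row B"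
  "dim_col (kron A B) = dim_col A * dim_col B"
  by (simp_all add: kron_def)

lemma kron_index: "i < dim_row A * dim_row B \<Longrightarrow> j < dim_col A * dim_col B \<Longrightarrow>
  kron A B $$ (i,j) = A $$ (i div dim_row B, j div dim_col B) * B $$ (i mod dim_row B, j mod dim_col B)"
  unfolding kron_def by (subst index_mat) auto

lemma kron_carrier: "A \<in> carrier_mat a b \<Longrightarrow> B \<in> carrier_mat c d \<Longrightarrow> kron A B \<in> carrier_mat (a*c) (b*d)"
  by (metis carrier_matD(1) carrier_matD(2) carrier_matI kron_dims(1) kron_dims(2))

lemma pstring_Cons: "pstring_mat (p # ps) = kron (pauli_mat p) (pstring_mat ps)"
  by (simp add: pstring_mat_def)

lemma pstring_Nil: "pstring_mat [] = 1\<^sub>m 1"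
  by (simp add: pstring_mat_def)

lemma pstring_carrier: "pstring_mat ps \<in> carrier_mat (2^length ps) (2^length ps)"
proof (induction ps)
  case Nil thus ?case by (simp add: pstring_Nil)
next
  case (Cons a ps)
  have "kron (pauli_mat a) (pstring_mat ps) \<in> carrier_mat (2 * 2^length ps) (2 * 2^length ps)"
    by (rule kron_carrier[OF pauli_carrier Cons.IH])
  thus ?case by (simp add: pstring_Cons)
qed

lemma pstring_dims[simp]: "dim_row (pstring_mat ps) = 2^length ps" "dim_col (pstring_mat ps) = 2^length ps"
  using pstring_carrier[of ps] by auto

lemma sum_split2: "(\<Sum>k = 0..<2*K. f k) = (\<Sum>k = 0..<K. f k) + (\<Sum>k = 0..<K. f (k + K)) " for f :: "nat \<Rightarrow> complex"
proof -
  have "{0..<2*K} = {0..<K} \<union> {K..<2*K}" by auto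
  hence "(\<Sum>k = 0..<2*K. f k) = (\<Sum>k = 0..<K. f k) + (\<Sum>k = K..<2*K. f k)"
    by (simp add: sum.union_disjoint)
  also have "(\<Sum>k = K..<2*K. f k) = (\<Sum>k = 0..<K. f (k + K))"
    using sum.shift_bounds_nat_ivl[of f 0 K K] by (simp add: mult_2)
  finally show ?thesis .
qed

lemma mult_entry: "A \<in> carrier_mat m k \<Longrightarrow> B \<in> carrier_mat k n \<Longrightarrow> i < m \<Longrightarrow> j < n \<Longrightarrow>
  (A * B) $$ (i,j) = (\<Sum>l = 0..<k. A $$ (i,l) * B $$ (l,j))"
proof -
  assume a: "A \<in> carrier_mat m k" "B \<in> carrier_mat k n" "i < m" "j < n"
  hence "(A * B) $$ (i,j) = row A i \<bullet> col B j" by simp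
  also have "\<dots> = (\<Sum>l = 0..<k. A $$ (i,l) * B $$ (l,j))"
    unfolding scalar_prod_def using a by (auto intro!: sum.cong)
  finally show ?thesis .
qed

lemma kron_mult:
  assumes A: "A \<in> carrier_mat 2 2" and C: "C \<in> carrier_mat 2 2"
    and B: "B \<in> carrier_mat K K" and D: "D \<in> carrier_mat K K"
  shows "kron A B * kron C D = kron (A * C) (B * D)"
proof (rule eq_matI)
  have dA: "dim_row A = 2" "dim_col A = 2" using A by auto
  have dC: "dim_row C = 2" "dim_col C = 2" using C by auto
  have dB: "dim_row B = K" "dim_col B = K" using B by auto
  have dD: "dim_row D = K" "dim_col D = K" using D by auto
  fix i j assume i: "i < dim_row (kron (A * C) (B * D))" and j: "j < dim_col (kron (A * C) (B * D))"
  have i2: "i < 2*K" and j2: "j < 2*K" using i j dA dB dC dD by auto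
  have Kp: "K > 0" using i2 by (cases K) auto
  have idiv: "i div K < 2" "j div K < 2" using i2 j2 by (simp_all add: less_mult_imp_div_less)
  have im: "i mod K < K" "j mod K < K" using Kp by auto
  have kAB: "kron A B \<in> carrier_mat (2*K) (2*K)" using kron_carrier[OF A B] .
  have kCD: "kron C D \<in> carrier_mat (2*K) (2*K)" using kron_carrier[OF C D] .
  have "(kron A B * kron C D) $$ (i,j) = (\<Sum>k = 0..<2*K. kron A B $$ (i,k) * kron C D $$ (k,j))"
    by (rule mult_entry[OF kAB kCD i2 j2])
  also have "\<dots> = (\<Sum>k = 0..<K. A $$ (i div K, 0) * C $$ (0, j div K) * (B $$ (i mod K, k) * D $$ (k, j mod K)))
       + (\<Sum>k = 0..<K. A $$ (i div K, 1) * C $$ (1, j div K) * (B $$ (i mod K, k) * D $$ (k, j mod K)))"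
  proof -
    have e1: "(\<Sum>k = 0..<K. kron A B $$ (i,k) * kron C D $$ (k,j)) = (\<Sum>k = 0..<K. A $$ (i div K, 0) * C $$ (0, j div K) * (B $$ (i mod K, k) * D $$ (k, j mod K)))"
    proof (rule sum.cong)
      fix k assume "k \<in> {0..<K}"
      hence k: "k < K" by simp
      have "kron A B $$ (i,k) = A $$ (i div K, 0) * B $$ (i mod K, k)"
        using i2 k dA dB by (simp add: kron_index)
      moreover have "kron C D $$ (k,j) = C $$ (0, j div K) * D $$ (k, j mod K)"
        using j2 k dC dD by (simp add: kron_index)
      ultimately show "kron A B $$ (i,k) * kron C D $$ (k,j) = A $$ (i div K, 0) * C $$ (0, j div K) * (B $$ (i mod K, k) * D $$ (k, j mod K))"
        by (simp add: ac_simps)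
    qed simp
    have e2: "(\<Sum>k = 0..<K. kron A B $$ (i,k+K) * kron C D $$ (k+K,j)) = (\<Sum>k = 0..<K. A $$ (i div K, 1) * C $$ (1, j div K) * (B $$ (i mod K, k) * D $$ (k, j mod K)))"
    proof (rule sum.cong)
      fix k assume "k \<in> {0..<K}"
      hence k: "k < K" by simp
      have kk: "k + K < 2 * K" "(k+K) div K = 1" "(k+K) mod K = k" using k by auto
      have "kron A B $$ (i,k+K) = A $$ (i div K, 1) * B $$ (i mod K, k)"
        using i2 kk dA dB by (simp add: kron_index)
      moreover have "kron C D $$ (k+K,j) = C $$ (1, j div K) * D $$ (k, j mod K)"
        using j2 kk dC dD by (simp add: kron_index)
      ultimately show "kron A B $$ (i,k+K) * kron C D $$ (k+K,j) = A $$ (i div K, 1) * C $$ (1, j div K) * (B $$ (i mod K, k) * D $$ (k, j mod K))"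
        by (simp add: ac_simps)
    qed simp
    show ?thesis unfolding sum_split2 e1 e2 ..
  qed
  also have "\<dots> = (A $$ (i div K, 0) * C $$ (0, j div K) + A $$ (i div K, 1) * C $$ (1, j div K))
        * (\<Sum>k = 0..<K. B $$ (i mod K, k) * D $$ (k, j mod K))"
    by (simp only: distrib_right sum_distrib_left mult.assoc sum.distrib)
  also have "\<dots> = (A * C) $$ (i div K, j div K) * (B * D) $$ (i mod K, j mod K)"
    using mult_entry[OF A C idiv] mult_entry[OF B D im] by (simp add: sum2)
  also have "\<dots> = kron (A * C) (B * D) $$ (i,j)"
    using i2 j2 dA dB dC dD by (simp add: kron_index)
  finally show "(kron A B * kron C D) $$ (i,j) = kron (A * C) (B * D) $$ (i,j)" .
next
  show "dim_row (kron A B * kron C D) = dim_row (kron (A * C) (B * D))" by simp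
  show "dim_col (kron A B * kron C D) = dim_col (kron (A * C) (B * D))" by simp
qed

lemma kron_smult: "kron (a \<cdot>\<^sub>m A) (b \<cdot>\<^sub>m B) = (a * b) \<cdot>\<^sub>m kron A B"
proof (rule eq_matI)
  fix i j assume i: "i < dim_row ((a * b) \<cdot>\<^sub>m kron A B)" and j: "j < dim_col ((a * b) \<cdot>\<^sub>m kron A B)"
  have i': "i < dim_row A * dim_row B" and j': "j < dim_col A * dim_col B" using i j by auto
  have "dim_row B > 0" using i' by (cases "dim_row B") auto
  moreover have "dim_col B > 0" using j' by (cases "dim_col B") auto
  moreover have "i div dim_row B < dim_row A" "j div dim_col B < dim_col A"
    using i' j' by (simp_all add: less_mult_imp_div_less)
  ultimately show "kron (a \<cdot>\<^sub>m A) (b \<cdot>\<^sub>m B) $$ (i, j) = ((a * b) \<cdot>\<^sub>m kron A B) $$ (i, j)"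
    using i j by (simp add: kron_index)
qed auto

fun sp :: "pauli list \<Rightarrow> pauli list \<Rightarrow> complex" where
  "sp (p # ps) (q # qs) = ph p q * sp ps qs"
| "sp _ _ = 1"

fun smul :: "pauli list \<Rightarrow> pauli list \<Rightarrow> pauli list" where
  "smul (p # ps) (q # qs) = pm p q # smul ps qs"
| "smul _ _ = []"

fun na :: "pauli list \<Rightarrow> pauli list \<Rightarrow> nat" where
  "na (p # ps) (q # qs) = (if anti p q then 1 else 0) + na ps qs"
| "na _ _ = 0"

lemma length_smul[simp]: "length (smul ps qs) = min (length ps) (length qs)"
  by (induction ps qs rule: smul.induct) auto

lemma nil_case: "pstring_mat [] * pstring_mat [] = 1 \<cdot>\<^sub>m pstring_mat []"
  unfolding pstring_Nil by (rule eq_matI) (simp_all add: index_mult_mat scalar_prod_def)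

lemma pstring_mult: "length ps = length qs \<Longrightarrow>
  pstring_mat ps * pstring_mat qs = sp ps qs \<cdot>\<^sub>m pstring_mat (smul ps qs)"
proof (induction ps qs rule: smul.induct)
  case (1 p ps q qs)
  hence "pstring_mat ps * pstring_mat qs = sp ps qs \<cdot>\<^sub>m pstring_mat (smul ps qs)" by simp
  moreover have "kron (pauli_mat p) (pstring_mat ps) * kron (pauli_mat q) (pstring_mat qs)
     = kron (pauli_mat p * pauli_mat q) (pstring_mat ps * pstring_mat qs)"
    using 1 by (intro kron_mult) (auto intro: pstring_carrier[of ps, simplified] pstring_carrier[of qs, simplified 1])
  ultimately show ?case using 1
    by (simp add: pstring_Cons pauli_mult kron_smult)
next
  case ("2_1" v) hence "v = []" by simp
  thus ?case using nil_case by simp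
next
  case ("2_2" v) hence "v = []" by simp
  thus ?case using nil_case by simp
qed

lemma ph_swap: "ph q p = (if anti p q then -1 else 1) * ph p q"
  by (cases p; cases q; simp add: anti_def)

lemma ph_sq: "ph p q ^ 2 = (if anti p q then -1 else 1)"
  by (cases p; cases q; simp add: anti_def power2_eq_square)

lemma sp_swap: "length ps = length qs \<Longrightarrow> sp qs ps = (-1) ^ na ps qs * sp ps qs"
proof (induction ps qs rule: smul.induct)
  case (1 p ps q qs)
  have "sp (q#qs) (p#ps) = ph q p * sp qs ps" by simp
  also have "\<dots> = ((if anti p q then -1 else 1) * ph p q) * ((-1)^na ps qs * sp ps qs)"
    using ph_swap[where p=p and q=q] 1 by simp
  also have "\<dots> = (-1) ^ na (p#ps) (q#qs) * sp (p#ps) (q#qs)" by simp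
  finally show ?case .
qed auto

lemma sp_sq: "length ps = length qs \<Longrightarrow> sp ps qs ^ 2 = (-1) ^ na ps qs"
  by (induction ps qs rule: smul.induct) (auto simp: ph_sq power_mult_distrib)



lemma smult_diff: "(a \<cdot>\<^sub>m A) - (b \<cdot>\<^sub>m A) = (a - b) \<cdot>\<^sub>m (A :: complex mat)"
  by (rule eq_matI) (simp_all add: algebra_simps)

lemma smult_smult: "a \<cdot>\<^sub>m (b \<cdot>\<^sub>m A) = (a * b) \<cdot>\<^sub>m (A :: complex mat)"
  by (rule eq_matI) simp_all

lemma smult_prod: "A \<in> carrier_mat N N \<Longrightarrow> B \<in> carrier_mat N N \<Longrightarrow>
   (a \<cdot>\<^sub>m A) * (b \<cdot>\<^sub>m B) = (a * b) \<cdot>\<^sub>m (A * B :: complex mat)"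
  by (metis mult_smult_assoc_mat mult_smult_distrib smult_carrier_mat smult_smult)

lemma comm_pstring:
  assumes len: "length ps = length qs"
  shows "comm (\<i> \<cdot>\<^sub>m pstring_mat ps) (\<i> \<cdot>\<^sub>m pstring_mat qs)
     = ((-1) * sp ps qs + (-1)^na ps qs * sp ps qs) \<cdot>\<^sub>m pstring_mat (smul ps qs)"
proof -
  let ?N = "2^length ps"
  have P: "pstring_mat ps \<in> carrier_mat ?N ?N" using pstring_carrier[of ps] .
  have Q: "pstring_mat qs \<in> carrier_mat ?N ?N" using pstring_carrier[of qs] len by simp
  have "(\<i> \<cdot>\<^sub>m pstring_mat ps) * (\<i> \<cdot>\<^sub>m pstring_mat qs) = (-1) \<cdot>\<^sub>m (pstring_mat ps * pstring_mat qs)"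
    using smult_prod[OF P Q] by simp
  also have "\<dots> = ((-1) * sp ps qs) \<cdot>\<^sub>m pstring_mat (smul ps qs)"
    using pstring_mult[OF len] by (simp add: smult_smult)
  finally have e1: "(\<i> \<cdot>\<^sub>m pstring_mat ps) * (\<i> \<cdot>\<^sub>m pstring_mat qs) = ((-1) * sp ps qs) \<cdot>\<^sub>m pstring_mat (smul ps qs)" .
  have "(\<i> \<cdot>\<^sub>m pstring_mat qs) * (\<i> \<cdot>\<^sub>m pstring_mat ps) = (-1) \<cdot>\<^sub>m (pstring_mat qs * pstring_mat ps)"
    using smult_prod[OF Q P] by simp
  also have "\<dots> = ((-1) * sp qs ps) \<cdot>\<^sub>m pstring_mat (smul qs ps)"
    using pstring_mult[of qs ps] len by (simp add: smult_smult)
  also have "smul qs ps = smul ps qs"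
    using len by (induction ps qs rule: smul.induct) (auto, (case_tac p; case_tac q; simp)+)
  finally have e2: "(\<i> \<cdot>\<^sub>m pstring_mat qs) * (\<i> \<cdot>\<^sub>m pstring_mat ps) = ((-1) * ((-1)^na ps qs * sp ps qs)) \<cdot>\<^sub>m pstring_mat (smul ps qs)"
    using sp_swap[OF len] by simp
  show ?thesis unfolding comm_def e1 e2 smult_diff by simp
qed



lemma smul_append: "length ps = length qs \<Longrightarrow> smul (ps @ xs) (qs @ ys) = smul ps qs @ smul xs ys"
  by (induction ps qs rule: smul.induct) auto

lemma na_append: "length ps = length qs \<Longrightarrow> na (ps @ xs) (qs @ ys) = na ps qs + na xs ys"
  by (induction ps qs rule: smul.induct) auto

lemma smul_repI: "length ps = m \<Longrightarrow> smul ps (replicate m PI) = ps"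
proof (induction ps arbitrary: m)
  case (Cons p ps) thus ?case by (cases m) (auto, cases p, auto)
qed simp

lemma smul_Irep: "length ps = m \<Longrightarrow> smul (replicate m PI) ps = ps"
proof (induction ps arbitrary: m)
  case (Cons p ps) thus ?case by (cases m) auto
qed simp

lemma na_repI: "length ps = m \<Longrightarrow> na ps (replicate m PI) = 0"
  by (induction ps arbitrary: m) (auto, case_tac m, auto simp: anti_def)

lemma na_Irep: "length ps = m \<Longrightarrow> na (replicate m PI) ps = 0"
  by (induction ps arbitrary: m) (auto, case_tac m, auto simp: anti_def)

lemma na_self: "na ps ps = 0"
  by (induction ps) (auto simp: anti_def)

lemma pm_eq_I: "pm p q = PI \<longleftrightarrow> p = q"
  by (cases p; cases q; simp)

lemma smul_eq_rep: "length ps = length qs \<Longrightarrow> smul ps qs = replicate (length ps) PI \<Longrightarrow> ps = qs"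
  by (induction ps qs rule: smul.induct) (auto simp: pm_eq_I)

lemma length_two_site[simp]: "length (two_site n j A B) = n"
  by (simp add: two_site_def)

lemma nth_two_site: "k < n \<Longrightarrow> two_site n j A B ! k = (if Suc k = j then A else if Suc k = j + 1 then B else PI)"
  unfolding two_site_def by (simp del: upt_Suc add: nth_upt)

inductive_set cc :: "nat \<Rightarrow> pauli list set" for n where
  gen: "1 \<le> j \<Longrightarrow> j \<le> n - 1 \<Longrightarrow> B \<in> {PX, PY, PZ} \<Longrightarrow> two_site n j PX B \<in> cc n"
| br: "ps \<in> cc n \<Longrightarrow> qs \<in> cc n \<Longrightarrow> odd (na ps qs) \<Longrightarrow> smul ps qs \<in> cc n"

lemma cc_length: "ps \<in> cc n \<Longrightarrow> length ps = n"
  by (induction rule: cc.induct) auto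

lemma sq_minus1: "(c::complex)^2 = -1 \<Longrightarrow> c = \<i> \<or> c = - \<i>"
  using power2_eq_iff[of c "\<i>"] by simp

lemma comm_odd:
  assumes len: "length ps = length qs" and odd: "odd (na ps qs)"
  shows "\<exists>r::real. \<i> \<cdot>\<^sub>m pstring_mat (smul ps qs)
      = complex_of_real r \<cdot>\<^sub>m comm (\<i> \<cdot>\<^sub>m pstring_mat ps) (\<i> \<cdot>\<^sub>m pstring_mat qs)"
proof -
  have c: "sp ps qs = \<i> \<or> sp ps qs = - \<i>" using sp_sq[OF len] odd by (intro sq_minus1) simp
  have cm: "comm (\<i> \<cdot>\<^sub>m pstring_mat ps) (\<i> \<cdot>\<^sub>m pstring_mat qs) = (-2 * sp ps qs) \<cdot>\<^sub>m pstring_mat (smul ps qs)"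
    using comm_pstring[OF len] odd by simp
  show ?thesis
  proof (cases "sp ps qs = \<i>")
    case True
    show ?thesis by (rule exI[of _ "-1/2"]) (simp add: cm True smult_smult)
  next
    case False
    hence "sp ps qs = - \<i>" using c by simp
    show ?thesis by (rule exI[of _ "1/2"]) (simp add: cm \<open>sp ps qs = - \<i>\<close> smult_smult)
  qed
qed

lemma comm_even:
  assumes len: "length ps = length qs" and ev: "even (na ps qs)"
  shows "comm (\<i> \<cdot>\<^sub>m pstring_mat ps) (\<i> \<cdot>\<^sub>m pstring_mat qs) = 0\<^sub>m (2^length ps) (2^length ps)"
proof -
  have "comm (\<i> \<cdot>\<^sub>m pstring_mat ps) (\<i> \<cdot>\<^sub>m pstring_mat qs) = 0 \<cdot>\<^sub>m pstring_mat (smul ps qs)"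
    using comm_pstring[OF len] ev by simp
  also have "\<dots> = 0\<^sub>m (2^length ps) (2^length ps)"
    using len by (intro eq_matI) simp_all
  finally show ?thesis .
qed

lemma cc_a15: "ps \<in> cc n \<Longrightarrow> \<i> \<cdot>\<^sub>m pstring_mat ps \<in> a15 n"
proof (induction rule: cc.induct)
  case (gen j B)
  thus ?case unfolding a15_def by (intro lie_closure.gen) blast
next
  case (br ps qs)
  have len: "length ps = length qs" using br cc_length by simp
  obtain r where r: "\<i> \<cdot>\<^sub>m pstring_mat (smul ps qs)
      = complex_of_real r \<cdot>\<^sub>m comm (\<i> \<cdot>\<^sub>m pstring_mat ps) (\<i> \<cdot>\<^sub>m pstring_mat qs)"
    using comm_odd[OF len br(3)] by blast
  show ?case unfolding r using br(4,5) unfolding a15_def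
    by (intro lie_closure.smult lie_closure.bracket)
qed



definition TT :: "nat \<Rightarrow> pauli list set" where
  "TT n = {ps. length ps = n \<and> hd ps \<in> {PI, PX} \<and> ps \<noteq> replicate n PI \<and> ps \<noteq> PX # replicate (n - 1) PI}"

lemma two_site_snoc: "1 \<le> j \<Longrightarrow> j \<le> n - 1 \<Longrightarrow> two_site n j A B @ [PI] = two_site (Suc n) j A B"
  by (rule nth_equalityI) (auto simp: nth_two_site nth_append)

lemma two_site_last: "1 \<le> n \<Longrightarrow> two_site (Suc n) n A B = replicate (n - 1) PI @ [A, B]"
  by (rule nth_equalityI) (auto simp: nth_two_site nth_append nth_Cons split: nat.split)

lemma cc_snoc: "ps \<in> cc n \<Longrightarrow> ps @ [PI] \<in> cc (Suc n)"
proof (induction rule: cc.induct)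
  case (gen j B)
  hence "two_site (Suc n) j PX B \<in> cc (Suc n)" by (intro cc.gen) auto
  thus ?case using gen two_site_snoc by simp
next
  case (br ps qs)
  have len: "length ps = length qs" using br cc_length by simp
  have "smul (ps @ [PI]) (qs @ [PI]) \<in> cc (Suc n)"
    using br by (intro cc.br) (auto simp: na_append[OF len] anti_def)
  thus ?case by (simp add: smul_append[OF len])
qed

lemma comb: "L1 @ xs \<in> cc m \<Longrightarrow> L2 @ ys \<in> cc m \<Longrightarrow> length L1 = length L2 \<Longrightarrow>
   odd (na L1 L2 + na xs ys) \<Longrightarrow> smul L1 L2 @ smul xs ys \<in> cc m"
  using cc.br[of "L1 @ xs" m "L2 @ ys"] by (simp add: smul_append na_append)

lemma not_I_cases: "B \<noteq> PI \<Longrightarrow> B \<in> {PX, PY, PZ}"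
  by (cases B) auto

locale step =
  fixes n :: nat
  assumes n2: "n \<ge> 2" and IH: "TT n \<subseteq> cc n"
begin

abbreviation "R \<equiv> replicate (n - 1) PI"

lemma snocI: "t \<in> TT n \<Longrightarrow> t @ [PI] \<in> cc (Suc n)"
  using IH cc_snoc by blast

lemma snocT: "\<rho> \<noteq> PI \<Longrightarrow> length w = n - 1 \<Longrightarrow> hd (w @ [\<rho>]) \<in> {PI, PX} \<Longrightarrow> w @ [\<rho>] \<in> TT n"
proof -
  assume s: "\<rho> \<noteq> PI" and l: "length w = n - 1" and h: "hd (w @ [\<rho>]) \<in> {PI, PX}"
  obtain m where m: "n - 1 = Suc m" using n2 by (cases "n - 1") auto
  have "w @ [\<rho>] \<noteq> replicate n PI"
  proof
    assume "w @ [\<rho>] = replicate n PI"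
    hence "last (w @ [\<rho>]) = last (replicate n PI)" by simp
    thus False using s n2 by simp
  qed
  moreover have "w @ [\<rho>] \<noteq> PX # replicate (n - 1) PI"
  proof
    assume "w @ [\<rho>] = PX # replicate (n - 1) PI"
    hence "last (w @ [\<rho>]) = last (PX # replicate (n - 1) PI)" by simp
    also have "\<dots> = PI" unfolding m by simp
    finally show False using s by simp
  qed
  ultimately show ?thesis using l n2 h unfolding TT_def by auto
qed

lemma RT: "\<sigma> \<noteq> PI \<Longrightarrow> R @ [\<sigma>] \<in> TT n"
proof -
  assume s: "\<sigma> \<noteq> PI"
  obtain m where m: "n - 1 = Suc m" using n2 by (cases "n - 1") auto
  show ?thesis using s m by (intro snocT) auto
qed

lemma SX: "B \<noteq> PI \<Longrightarrow> R @ [PX, B] \<in> cc (Suc n)"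
proof -
  assume b: "B \<noteq> PI"
  have "two_site (Suc n) n PX B \<in> cc (Suc n)"
    using n2 not_I_cases[OF b] by (intro cc.gen) auto
  thus ?thesis using two_site_last[of n PX B] n2 by simp
qed

lemma S1: "\<sigma> \<noteq> PI \<Longrightarrow> B \<noteq> PI \<Longrightarrow> R @ [\<sigma>, B] \<in> cc (Suc n)"
proof -
  assume s: "\<sigma> \<noteq> PI" and b: "B \<noteq> PI"
  have Y: "R @ [PY, B] \<in> cc (Suc n)"
  proof -
    have "smul R R @ smul [PZ, PI] [PX, B] \<in> cc (Suc n)"
      using snocI[OF RT[of PZ]] SX[OF b] b by (intro comb) (auto simp: na_self anti_def)
    thus ?thesis by (simp add: smul_repI)
  qed
  have Z: "R @ [PZ, B] \<in> cc (Suc n)"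
  proof -
    have "smul R R @ smul [PY, PI] [PX, B] \<in> cc (Suc n)"
      using snocI[OF RT[of PY]] SX[OF b] b by (intro comb) (auto simp: na_self anti_def)
    thus ?thesis by (simp add: smul_repI)
  qed
  show ?thesis using s SX[OF b] Y Z by (cases \<sigma>) auto
qed

lemma S2: "length w = n - 1 \<Longrightarrow> hd (w @ [\<tau>]) \<in> {PI, PX} \<Longrightarrow> \<tau> \<noteq> PI \<Longrightarrow> B \<noteq> PI \<Longrightarrow> w @ [\<tau>, B] \<in> cc (Suc n)"
proof -
  assume l: "length w = n - 1" and h: "hd (w @ [\<tau>]) \<in> {PI, PX}" and t: "\<tau> \<noteq> PI" and b: "B \<noteq> PI"
  have wne: "w \<noteq> []" using l n2 by auto
  have hh: "hd (w @ [\<rho>]) \<in> {PI, PX}" for \<rho> using h wne by simp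
  have gen: "w @ [pm \<rho> \<sigma>, B] \<in> cc (Suc n)" if "\<rho> \<noteq> PI" "\<sigma> \<noteq> PI" "anti \<rho> \<sigma>" for \<rho> \<sigma>
  proof -
    have "smul w R @ smul [\<rho>, PI] [\<sigma>, B] \<in> cc (Suc n)"
      using snocI[OF snocT[OF that(1) l hh]] S1[OF that(2) b] l that(3) b
      by (intro comb) (auto simp: na_repI anti_def)
    thus ?thesis using l by (simp add: smul_repI)
  qed
  show ?thesis
  proof (cases \<tau>)
    case PX thus ?thesis using gen[of PY PZ] by (simp add: anti_def)
  next
    case PY thus ?thesis using gen[of PZ PX] by (simp add: anti_def)
  next
    case PZ thus ?thesis using gen[of PX PY] by (simp add: anti_def)
  qed (use t in simp)
qed

lemma S3: "length w = n - 1 \<Longrightarrow> hd (w @ [PI]) \<in> {PI, PX} \<Longrightarrow> B \<noteq> PI \<Longrightarrow> w @ [PI, B] \<in> cc (Suc n)"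
proof -
  assume l: "length w = n - 1" and h: "hd (w @ [PI]) \<in> {PI, PX}" and b: "B \<noteq> PI"
  have wne: "w \<noteq> []" using l n2 by auto
  have hh: "hd (w @ [PX]) \<in> {PI, PX}" using h wne by simp
  have gen: "w @ [PI, pm B1 B2] \<in> cc (Suc n)" if "B1 \<noteq> PI" "B2 \<noteq> PI" "anti B1 B2" for B1 B2
  proof -
    have "smul w R @ smul [PX, B1] [PX, B2] \<in> cc (Suc n)"
      using S2[OF l hh _ that(1)] S1[OF _ that(2)] l that(3)
      by (intro comb) (auto simp: na_repI anti_def)
    thus ?thesis using l by (simp add: smul_repI)
  qed
  show ?thesis
  proof (cases B)
    case PX thus ?thesis using gen[of PY PZ] by (simp add: anti_def)
  next
    case PY thus ?thesis using gen[of PZ PX] by (simp add: anti_def)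
  next
    case PZ thus ?thesis using gen[of PX PY] by (simp add: anti_def)
  qed (use b in simp)
qed

lemma main: "t \<in> TT (Suc n) \<Longrightarrow> t \<in> cc (Suc n)"
proof -
  assume tT: "t \<in> TT (Suc n)"
  hence lt: "length t = Suc n" and ht: "hd t \<in> {PI, PX}" and t1: "t \<noteq> replicate (Suc n) PI"
    and t2: "t \<noteq> PX # replicate n PI" unfolding TT_def by auto
  have tne: "t \<noteq> []" using lt by auto
  define u where "u = butlast t"
  define c where "c = last t"
  have tu: "t = u @ [c]" using tne unfolding u_def c_def by simp
  have lu: "length u = n" using lt unfolding u_def by simp
  have une: "u \<noteq> []" using lu n2 by auto
  have hu: "hd u = hd t" using tu une by simp
  show ?thesis
  proof (cases "c = PI")
    case True
    have "u \<in> TT n"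
    proof -
      have "u \<noteq> replicate n PI" using t1 tu True by (auto simp: replicate_append_same[symmetric])
      moreover have "u \<noteq> PX # replicate (n - 1) PI"
      proof
        assume "u = PX # replicate (n - 1) PI"
        hence "t = PX # replicate (n - 1) PI @ [PI]" using tu True by simp
        also have "replicate (n - 1) PI @ [PI] = replicate n PI"
        proof -
          obtain k where k: "n = Suc k" using n2 by (cases n) auto
          show ?thesis unfolding k by (simp add: replicate_append_same)
        qed
        finally show False using t2 by simp
      qed
      ultimately show ?thesis using lu hu ht unfolding TT_def by auto
    qed
    thus ?thesis using snocI tu True by simp
  next
    case False
    define w where "w = butlast u"
    define \<tau> where "\<tau> = last u"
    have uw: "u = w @ [\<tau>]" using une unfolding w_def \<tau>_def by simp
    have lw: "length w = n - 1" using lu unfolding w_def by simp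
    have hw: "hd (w @ [\<tau>]) \<in> {PI, PX}" using hu ht uw by simp
    have tw: "t = w @ [\<tau>, c]" using tu uw by simp
    show ?thesis
    proof (cases "\<tau> = PI")
      case True thus ?thesis using S3[OF lw _ False] hw tw by simp
    next
      case f2: False thus ?thesis using S2[OF lw hw f2 False] tw by simp
    qed
  qed
qed

end

lemma base2: "TT 2 \<subseteq> cc 2"
proof
  fix t assume t: "t \<in> TT 2"
  have g: "[PX, B] \<in> cc 2" if "B \<in> {PX, PY, PZ}" for B
  proof -
    have "two_site 2 1 PX B \<in> cc 2" using that by (intro cc.gen) auto
    moreover have "two_site 2 1 PX B = [PX, B]" by (simp add: two_site_def numeral_2_eq_2)
    ultimately show ?thesis by simp
  qed
  have IZ: "[PI, PZ] \<in> cc 2"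
    using cc.br[OF g[of PX] g[of PY]] by (simp add: anti_def)
  have IX: "[PI, PX] \<in> cc 2"
    using cc.br[OF g[of PY] g[of PZ]] by (simp add: anti_def)
  have IY: "[PI, PY] \<in> cc 2"
    using cc.br[OF g[of PZ] g[of PX]] by (simp add: anti_def)
  obtain a b where ab: "t = [a, b]" using t unfolding TT_def
    by (cases t; cases "tl t") (auto simp: numeral_2_eq_2)
  show "t \<in> cc 2" using t g IZ IX IY unfolding ab TT_def
    by (cases a; cases b) (auto simp: numeral_2_eq_2)
qed

lemma TT_cc: "n \<ge> 2 \<Longrightarrow> TT n \<subseteq> cc n"
proof (induction n rule: nat_induct_at_least)
  case base thus ?case by (rule base2)
next
  case (Suc n)
  interpret step n using Suc by unfold_locales
  show ?case using main by blast
qed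



lemma comm_carrier: "x \<in> carrier_mat N N \<Longrightarrow> y \<in> carrier_mat N N \<Longrightarrow> comm x y \<in> carrier_mat N N"
  unfolding comm_def by (metis minus_carrier_mat mult_carrier_mat)

lemma comm_add_l: assumes x: "x \<in> carrier_mat N N" and y: "y \<in> carrier_mat N N" and z: "z \<in> carrier_mat N N"
  shows "comm (x + y) z = comm x z + comm y z"
proof -
  have e1: "(x + y) * z = x * z + y * z" using x y z by (simp add: add_mult_distrib_mat)
  have e2: "z * (x + y) = z * x + z * y" using x y z by (simp add: mult_add_distrib_mat)
  have c: "x * z \<in> carrier_mat N N" "y * z \<in> carrier_mat N N" "z * x \<in> carrier_mat N N" "z * y \<in> carrier_mat N N"
    using x y z by auto
  show ?thesis unfolding comm_def e1 e2 using c x y z by (intro eq_matI) auto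
qed

lemma comm_add_r: assumes x: "x \<in> carrier_mat N N" and y: "y \<in> carrier_mat N N" and z: "z \<in> carrier_mat N N"
  shows "comm z (x + y) = comm z x + comm z y"
proof -
  have e1: "(x + y) * z = x * z + y * z" using x y z by (simp add: add_mult_distrib_mat)
  have e2: "z * (x + y) = z * x + z * y" using x y z by (simp add: mult_add_distrib_mat)
  have c: "x * z \<in> carrier_mat N N" "y * z \<in> carrier_mat N N" "z * x \<in> carrier_mat N N" "z * y \<in> carrier_mat N N"
    using x y z by auto
  show ?thesis unfolding comm_def e1 e2 using c x y z by (intro eq_matI) auto
qed

lemma comm_smult_l: assumes x: "x \<in> carrier_mat N N" and y: "y \<in> carrier_mat N N"
  shows "comm (c \<cdot>\<^sub>m x) y = c \<cdot>\<^sub>m comm x y"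
proof -
  have e1: "(c \<cdot>\<^sub>m x) * y = c \<cdot>\<^sub>m (x * y)" using x y by (simp add: mult_smult_assoc_mat)
  have e2: "y * (c \<cdot>\<^sub>m x) = c \<cdot>\<^sub>m (y * x)" using x y by (simp add: mult_smult_distrib)
  have cc: "x * y \<in> carrier_mat N N" "y * x \<in> carrier_mat N N" using x y by auto
  show ?thesis unfolding comm_def e1 e2 using cc x y by (intro eq_matI) (auto simp: algebra_simps)
qed

lemma comm_smult_r: assumes x: "x \<in> carrier_mat N N" and y: "y \<in> carrier_mat N N"
  shows "comm y (c \<cdot>\<^sub>m x) = c \<cdot>\<^sub>m comm y x"
proof -
  have e1: "(c \<cdot>\<^sub>m x) * y = c \<cdot>\<^sub>m (x * y)" using x y by (simp add: mult_smult_assoc_mat)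
  have e2: "y * (c \<cdot>\<^sub>m x) = c \<cdot>\<^sub>m (y * x)" using x y by (simp add: mult_smult_distrib)
  have cc: "x * y \<in> carrier_mat N N" "y * x \<in> carrier_mat N N" using x y by auto
  show ?thesis unfolding comm_def e1 e2 using cc x y by (intro eq_matI) (auto simp: algebra_simps)
qed

lemma comm_zero_l: "y \<in> carrier_mat N N \<Longrightarrow> comm (0\<^sub>m N N) y = 0\<^sub>m N N"
  unfolding comm_def by (intro eq_matI) auto

lemma comm_zero_r: "y \<in> carrier_mat N N \<Longrightarrow> comm y (0\<^sub>m N N) = 0\<^sub>m N N"
  unfolding comm_def by (intro eq_matI) auto

lemma span_carrier: assumes "S \<subseteq> carrier_mat N N" shows "x \<in> real_span_mat N S \<Longrightarrow> x \<in> carrier_mat N N"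
  by (induction rule: real_span_mat.induct) (use assms in auto)

lemma TT_smul: assumes p: "ps \<in> TT n" and q: "qs \<in> TT n" and o: "odd (na ps qs)"
  shows "smul ps qs \<in> TT n"
proof -
  have lp: "length ps = n" and lq: "length qs = n" and hp: "hd ps \<in> {PI, PX}" and hq: "hd qs \<in> {PI, PX}"
    using p q unfolding TT_def by auto
  have n0: "n \<noteq> 0" using o lp lq by (cases ps; cases qs) auto
  obtain a ps' where ps: "ps = a # ps'" using lp n0 by (cases ps) auto
  obtain b qs' where qs: "qs = b # qs'" using lq n0 by (cases qs) auto
  have l': "length ps' = length qs'" using lp lq ps qs by simp
  have hs: "hd (smul ps qs) \<in> {PI, PX}" using hp hq unfolding ps qs by (cases a; cases b) auto
  have r1: "smul ps qs \<noteq> replicate n PI"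
  proof
    assume "smul ps qs = replicate n PI"
    hence "ps = qs" using smul_eq_rep[of ps qs] lp lq by simp
    thus False using o na_self by simp
  qed
  have r2: "smul ps qs \<noteq> PX # replicate (n - 1) PI"
  proof
    assume e: "smul ps qs = PX # replicate (n - 1) PI"
    hence "smul ps' qs' = replicate (length ps') PI" using ps qs lp by simp
    hence "ps' = qs'" using smul_eq_rep l' by blast
    moreover have "pm a b = PX" using e ps qs by simp
    ultimately have "na ps qs = 0" using hp hq ps qs na_self by (cases a; cases b) (auto simp: anti_def)
    thus False using o by simp
  qed
  show ?thesis using hs r1 r2 lp lq unfolding TT_def by simp
qed

lemma two_site_TT: "1 \<le> j \<Longrightarrow> j \<le> n - 1 \<Longrightarrow> B \<noteq> PI \<Longrightarrow> two_site n j PX B \<in> TT n"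
proof -
  assume j1: "1 \<le> j" and jn: "j \<le> n - 1" and b: "B \<noteq> PI"
  have n0: "0 < n" using j1 jn by auto
  have ne: "two_site n j PX B \<noteq> []" using n0 length_two_site[of n j PX B] by (metis length_0_conv less_irrefl)
  have h: "hd (two_site n j PX B) \<in> {PI, PX}"
    using n0 hd_conv_nth[OF ne] nth_two_site[of 0 n j PX B] j1
    by (cases "j = 1") auto
  have r1: "two_site n j PX B \<noteq> replicate n PI"
  proof
    assume "two_site n j PX B = replicate n PI"
    hence "two_site n j PX B ! (j - 1) = replicate n PI ! (j - 1)" by simp
    moreover have "j - 1 < n" using j1 jn by simp
    ultimately show False using nth_two_site[of "j - 1" n j PX B] j1 jn by simp
  qed
  have r2: "two_site n j PX B \<noteq> PX # replicate (n - 1) PI"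
  proof
    assume "two_site n j PX B = PX # replicate (n - 1) PI"
    hence "two_site n j PX B ! j = (PX # replicate (n - 1) PI) ! j" by simp
    thus False using nth_two_site[of j n j PX B] j1 jn b by simp
  qed
  show ?thesis using h r1 r2 unfolding TT_def by simp
qed



definition SS :: "nat \<Rightarrow> complex mat set" where
  "SS n = {\<i> \<cdot>\<^sub>m pstring_mat ps | ps. ps \<in> TT n}"

lemma SS_carrier: "SS n \<subseteq> carrier_mat (2^n) (2^n)"
  unfolding SS_def TT_def using pstring_carrier by auto

lemma pstr_TT_carrier: "ps \<in> TT n \<Longrightarrow> \<i> \<cdot>\<^sub>m pstring_mat ps \<in> carrier_mat (2^n) (2^n)"
  unfolding TT_def using pstring_carrier by auto

lemma gen_gen: assumes p: "ps \<in> TT n" and q: "qs \<in> TT n"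
  shows "comm (\<i> \<cdot>\<^sub>m pstring_mat ps) (\<i> \<cdot>\<^sub>m pstring_mat qs) \<in> real_span_mat (2^n) (SS n)"
proof -
  have lp: "length ps = n" and lq: "length qs = n" using p q unfolding TT_def by auto
  have len: "length ps = length qs" using lp lq by simp
  show ?thesis
  proof (cases "even (na ps qs)")
    case True
    show ?thesis using comm_even[OF len True] lp real_span_mat.zero by simp
  next
    case False
    have c: "sp ps qs = \<i> \<or> sp ps qs = - \<i>" using sp_sq[OF len] False by (intro sq_minus1) simp
    have cm: "comm (\<i> \<cdot>\<^sub>m pstring_mat ps) (\<i> \<cdot>\<^sub>m pstring_mat qs) = (-2 * sp ps qs) \<cdot>\<^sub>m pstring_mat (smul ps qs)"
      using comm_pstring[OF len] False by simp
    have g: "\<i> \<cdot>\<^sub>m pstring_mat (smul ps qs) \<in> real_span_mat (2^n) (SS n)"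
      using TT_smul[OF p q] False unfolding SS_def by (intro real_span_mat.gen) blast
    obtain r :: real where r: "-2 * sp ps qs = complex_of_real r * \<i>"
    proof (cases "sp ps qs = \<i>")
      case True thus ?thesis using that[of "-2"] by simp
    next
      case False hence "sp ps qs = - \<i>" using c by simp
      thus ?thesis using that[of "2"] by simp
    qed
    have "comm (\<i> \<cdot>\<^sub>m pstring_mat ps) (\<i> \<cdot>\<^sub>m pstring_mat qs) = complex_of_real r \<cdot>\<^sub>m (\<i> \<cdot>\<^sub>m pstring_mat (smul ps qs))"
      unfolding cm r by (simp add: smult_smult)
    thus ?thesis using real_span_mat.smult[OF g] by simp
  qed
qed

lemma gen_any: assumes p: "ps \<in> TT n" and y: "y \<in> real_span_mat (2^n) (SS n)"
  shows "comm (\<i> \<cdot>\<^sub>m pstring_mat ps) y \<in> real_span_mat (2^n) (SS n)"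
  using y
proof (induction rule: real_span_mat.induct)
  case (gen x)
  then obtain qs where "qs \<in> TT n" "x = \<i> \<cdot>\<^sub>m pstring_mat qs" unfolding SS_def by blast
  thus ?case using gen_gen[OF p] by simp
next
  case zero
  thus ?case using comm_zero_r[OF pstr_TT_carrier[OF p]] real_span_mat.zero by simp
next
  case (add x y)
  have cx: "x \<in> carrier_mat (2^n) (2^n)" and cy: "y \<in> carrier_mat (2^n) (2^n)"
    using add span_carrier[OF SS_carrier] by auto
  show ?case using comm_add_r[OF cx cy pstr_TT_carrier[OF p]] add real_span_mat.add by simp
next
  case (smult x r)
  have cx: "x \<in> carrier_mat (2^n) (2^n)" using smult span_carrier[OF SS_carrier] by auto
  show ?case using comm_smult_r[OF cx pstr_TT_carrier[OF p]] smult real_span_mat.smult by simp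
qed

lemma any_any: assumes x: "x \<in> real_span_mat (2^n) (SS n)" and y: "y \<in> real_span_mat (2^n) (SS n)"
  shows "comm x y \<in> real_span_mat (2^n) (SS n)"
  using x
proof (induction rule: real_span_mat.induct)
  case (gen x)
  then obtain ps where "ps \<in> TT n" "x = \<i> \<cdot>\<^sub>m pstring_mat ps" unfolding SS_def by blast
  thus ?case using gen_any y by simp
next
  case zero
  have cy: "y \<in> carrier_mat (2^n) (2^n)" using y span_carrier[OF SS_carrier] by auto
  thus ?case using comm_zero_l[OF cy] real_span_mat.zero by simp
next
  case (add x1 x2)
  have cx: "x1 \<in> carrier_mat (2^n) (2^n)" "x2 \<in> carrier_mat (2^n) (2^n)" "y \<in> carrier_mat (2^n) (2^n)"
    using add y span_carrier[OF SS_carrier] by auto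
  show ?case using comm_add_l[OF cx] add real_span_mat.add by simp
next
  case (smult x r)
  have cx: "x \<in> carrier_mat (2^n) (2^n)" "y \<in> carrier_mat (2^n) (2^n)"
    using smult y span_carrier[OF SS_carrier] by auto
  show ?case using comm_smult_l[OF cx] smult real_span_mat.smult by simp
qed

lemma a15_sub: "a15 n \<subseteq> real_span_mat (2^n) (SS n)"
proof
  fix x assume "x \<in> a15 n"
  thus "x \<in> real_span_mat (2^n) (SS n)" unfolding a15_def
  proof (induction rule: lie_closure.induct)
    case (gen x)
    then obtain j B where jB: "x = \<i> \<cdot>\<^sub>m pstring_mat (two_site n j PX B)" "1 \<le> j" "j \<le> n - 1" "B \<in> {PX, PY, PZ}"
      by blast
    have "two_site n j PX B \<in> TT n" using jB by (intro two_site_TT) auto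
    thus ?case using jB unfolding SS_def by (intro real_span_mat.gen) blast
  qed (auto intro: real_span_mat.intros any_any)
qed

lemma sub_a15: assumes n2: "n \<ge> 2" shows "real_span_mat (2^n) (SS n) \<subseteq> a15 n"
proof
  fix x assume "x \<in> real_span_mat (2^n) (SS n)"
  thus "x \<in> a15 n"
  proof (induction rule: real_span_mat.induct)
    case (gen x)
    then obtain ps where "ps \<in> TT n" "x = \<i> \<cdot>\<^sub>m pstring_mat ps" unfolding SS_def by blast
    thus ?case using TT_cc[OF n2] cc_a15 by blast
  qed (auto simp: a15_def intro: lie_closure.intros)
qed

lemma a15_eq: "n \<ge> 2 \<Longrightarrow> a15 n = real_span_mat (2^n) (SS n)"
  using a15_sub sub_a15 by blast



lemma ctrans_dims[simp]: "dim_row (ctrans A) = dim_col A" "dim_col (ctrans A) = dim_row A"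
  by (simp_all add: ctrans_def)

lemma ctrans_index: "i < dim_col A \<Longrightarrow> j < dim_row A \<Longrightarrow> ctrans A $$ (i,j) = cnj (A $$ (j,i))"
  unfolding ctrans_def by (subst index_mat) auto

lemma ctrans_kron: "ctrans (kron A B) = kron (ctrans A) (ctrans B)"
proof (rule eq_matI)
  fix i j assume i: "i < dim_row (kron (ctrans A) (ctrans B))" and j: "j < dim_col (kron (ctrans A) (ctrans B))"
  have i': "i < dim_col A * dim_col B" and j': "j < dim_row A * dim_row B" using i j by auto
  have "dim_col B > 0" using i' by (cases "dim_col B") auto
  moreover have "dim_row B > 0" using j' by (cases "dim_row B") auto
  moreover have "i div dim_col B < dim_col A" "j div dim_row B < dim_row A"
    using i' j' by (simp_all add: less_mult_imp_div_less)
  ultimately show "ctrans (kron A B) $$ (i, j) = kron (ctrans A) (ctrans B) $$ (i, j)"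
    using i' j' by (simp add: ctrans_index kron_index)
qed auto

lemma pauli_herm: "ctrans (pauli_mat p) = pauli_mat p"
  apply (rule eq_matI)
   apply (simp add: ctrans_index)
   apply (cases p; auto simp: pauli_mat_def dest!: less2)
  apply simp_all
  done

lemma pstring_herm: "ctrans (pstring_mat ps) = pstring_mat ps"
proof (induction ps)
  case Nil show ?case unfolding pstring_Nil by (rule eq_matI) (auto simp: ctrans_index)
next
  case (Cons a ps) thus ?case by (simp add: pstring_Cons ctrans_kron pauli_herm)
qed

lemma mtrace_kron: assumes A: "A \<in> carrier_mat 2 2" and B: "B \<in> carrier_mat K K"
  shows "mtrace (kron A B) = mtrace A * mtrace B"
proof -
  have dA: "dim_row A = 2" "dim_col A = 2" using A by auto
  have dB: "dim_row B = K" "dim_col B = K" using B by auto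
  have "mtrace (kron A B) = (\<Sum>i = 0..<2*K. kron A B $$ (i,i))"
    unfolding mtrace_def using dA dB by (simp add: atLeast0LessThan)
  also have "\<dots> = (\<Sum>i = 0..<K. A $$ (0,0) * B $$ (i,i)) + (\<Sum>i = 0..<K. A $$ (1,1) * B $$ (i,i))"
    unfolding sum_split2 using dA dB by (auto simp: kron_index intro!: arg_cong2[where f="(+)"] sum.cong)
  also have "\<dots> = mtrace A * mtrace B"
    unfolding mtrace_def dA dB by (simp add: sum_distrib_left[symmetric] distrib_right atLeast0LessThan[symmetric] sum2)
  finally show ?thesis .
qed

lemma pauli_trace: "mtrace (pauli_mat p) = (if p = PI then 2 else 0)"
  by (cases p) (auto simp: mtrace_def pauli_mat_def lessThan_nat_numeral)

lemma pstring_trace: "ps \<noteq> replicate (length ps) PI \<Longrightarrow> mtrace (pstring_mat ps) = 0"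
proof (induction ps)
  case Nil thus ?case by simp
next
  case (Cons a ps)
  have "mtrace (pstring_mat (a # ps)) = mtrace (pauli_mat a) * mtrace (pstring_mat ps)"
    unfolding pstring_Cons by (rule mtrace_kron[OF pauli_carrier pstring_carrier])
  thus ?case using Cons by (auto simp: pauli_trace)
qed

lemma mtrace_smult: "A \<in> carrier_mat N N \<Longrightarrow> mtrace (c \<cdot>\<^sub>m A) = c * mtrace A"
  unfolding mtrace_def sum_distrib_left by (auto intro!: sum.cong)

lemma mtrace_add: "A \<in> carrier_mat N N \<Longrightarrow> B \<in> carrier_mat N N \<Longrightarrow> mtrace (A + B) = mtrace A + mtrace B"
  unfolding mtrace_def by (simp add: sum.distrib)

lemma ctrans_add: "A \<in> carrier_mat N N \<Longrightarrow> B \<in> carrier_mat N N \<Longrightarrow> ctrans (A + B) = ctrans A + ctrans B"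
  by (rule eq_matI) (auto simp: ctrans_index)

lemma ctrans_smult_real: "ctrans (complex_of_real r \<cdot>\<^sub>m A) = complex_of_real r \<cdot>\<^sub>m ctrans A"
  by (rule eq_matI) (auto simp: ctrans_index)

lemma su_zero: "0\<^sub>m N N \<in> su N"
  unfolding su_def mtrace_def by (auto intro!: eq_matI simp: ctrans_index)

lemma su_add: "A \<in> su N \<Longrightarrow> B \<in> su N \<Longrightarrow> A + B \<in> su N"
proof -
  assume a: "A \<in> su N" and b: "B \<in> su N"
  have c: "A \<in> carrier_mat N N" "B \<in> carrier_mat N N" using a b unfolding su_def by auto
  have "ctrans (A + B) = - (A + B)"
    using a b c unfolding su_def by (simp add: ctrans_add) (rule eq_matI, auto)
  moreover have "mtrace (A + B) = 0" using a b c unfolding su_def by (simp add: mtrace_add)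
  ultimately show ?thesis using c unfolding su_def by auto
qed

lemma su_smult: "A \<in> su N \<Longrightarrow> complex_of_real r \<cdot>\<^sub>m A \<in> su N"
proof -
  assume a: "A \<in> su N"
  have c: "A \<in> carrier_mat N N" using a unfolding su_def by auto
  have "ctrans (complex_of_real r \<cdot>\<^sub>m A) = - (complex_of_real r \<cdot>\<^sub>m A)"
    using a c unfolding su_def by (simp add: ctrans_smult_real) (rule eq_matI, auto)
  moreover have "mtrace (complex_of_real r \<cdot>\<^sub>m A) = 0" using a unfolding su_def by (simp add: mtrace_smult[OF c])
  ultimately show ?thesis using c unfolding su_def by auto
qed

lemma pstring_su: "ps \<noteq> replicate (length ps) PI \<Longrightarrow> \<i> \<cdot>\<^sub>m pstring_mat ps \<in> su (2^length ps)"
proof -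
  assume ne: "ps \<noteq> replicate (length ps) PI"
  have "ctrans (\<i> \<cdot>\<^sub>m pstring_mat ps) = - (\<i> \<cdot>\<^sub>m pstring_mat ps)"
  proof -
    have "ctrans (\<i> \<cdot>\<^sub>m pstring_mat ps) = (- \<i>) \<cdot>\<^sub>m ctrans (pstring_mat ps)"
      by (rule eq_matI) (auto simp: ctrans_index)
    thus ?thesis by (simp add: pstring_herm) (rule eq_matI, auto)
  qed
  moreover have "mtrace (\<i> \<cdot>\<^sub>m pstring_mat ps) = 0" using pstring_trace[OF ne] by (simp add: mtrace_smult[OF pstring_carrier])
  ultimately show ?thesis unfolding su_def using pstring_carrier[of ps] by auto
qed



definition SKs :: "nat \<Rightarrow> complex mat set" where
  "SKs m = {\<i> \<cdot>\<^sub>m pstring_mat ps | ps. length ps = m}"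

definition SUs :: "nat \<Rightarrow> complex mat set" where
  "SUs m = {\<i> \<cdot>\<^sub>m pstring_mat ps | ps. length ps = m \<and> ps \<noteq> replicate m PI}"

lemma SKs_carrier: "SKs m \<subseteq> carrier_mat (2^m) (2^m)"
  unfolding SKs_def using pstring_carrier by auto

lemma SUs_carrier: "SUs m \<subseteq> carrier_mat (2^m) (2^m)"
  unfolding SUs_def using pstring_carrier by auto

lemma kron_add_r: assumes x: "x \<in> carrier_mat K K" and y: "y \<in> carrier_mat K K"
  shows "kron (pauli_mat p) (x + y) = kron (pauli_mat p) x + kron (pauli_mat p) y"
proof (rule eq_matI)
  fix i j assume i: "i < dim_row (kron (pauli_mat p) x + kron (pauli_mat p) y)"
    and j: "j < dim_col (kron (pauli_mat p) x + kron (pauli_mat p) y)"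
  have i2: "i < 2 * K" and j2: "j < 2 * K" using i j x y by auto
  have Kp: "K > 0" using i2 by (cases K) auto
  show "kron (pauli_mat p) (x + y) $$ (i, j) = (kron (pauli_mat p) x + kron (pauli_mat p) y) $$ (i, j)"
    using i2 j2 x y Kp by (simp add: kron_index algebra_simps)
qed (use x y in auto)

lemma kron_smult_r: "kron (pauli_mat p) (c \<cdot>\<^sub>m x) = c \<cdot>\<^sub>m kron (pauli_mat p) x"
proof -
  have "pauli_mat p = 1 \<cdot>\<^sub>m pauli_mat p" by (rule eq_matI) auto
  hence "kron (pauli_mat p) (c \<cdot>\<^sub>m x) = kron (1 \<cdot>\<^sub>m pauli_mat p) (c \<cdot>\<^sub>m x)" by simp
  thus ?thesis by (simp add: kron_smult)
qed

lemma kron_zero_r: "kron (pauli_mat p) (0\<^sub>m K K) = 0\<^sub>m (2*K) (2*K)"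
proof (rule eq_matI)
  fix i j assume i: "i < dim_row (0\<^sub>m (2*K) (2*K) :: complex mat)" and j: "j < dim_col (0\<^sub>m (2*K) (2*K) :: complex mat)"
  have i2: "i < 2 * K" and j2: "j < 2 * K" using i j by auto
  have Kp: "K > 0" using i2 by (cases K) auto
  show "kron (pauli_mat p) (0\<^sub>m K K) $$ (i, j) = 0\<^sub>m (2 * K) (2 * K) $$ (i, j)"
    using i2 j2 Kp by (simp add: kron_index)
qed auto

lemma kron_pstring: "kron (pauli_mat p) (\<i> \<cdot>\<^sub>m pstring_mat ps) = \<i> \<cdot>\<^sub>m pstring_mat (p # ps)"
  by (simp add: kron_smult_r pstring_Cons)

lemma kron_span: assumes S: "S \<subseteq> carrier_mat K K" and T: "\<And>s. s \<in> S \<Longrightarrow> kron (pauli_mat p) s \<in> T"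
  shows "x \<in> real_span_mat K S \<Longrightarrow> kron (pauli_mat p) x \<in> real_span_mat (2*K) T"
proof (induction rule: real_span_mat.induct)
  case (gen x) thus ?case using T real_span_mat.gen by blast
next
  case zero thus ?case using kron_zero_r real_span_mat.zero by metis
next
  case (add x y)
  have "x \<in> carrier_mat K K" "y \<in> carrier_mat K K" using add span_carrier[OF S] by auto
  thus ?case using kron_add_r add real_span_mat.add by metis
next
  case (smult x r) thus ?case using kron_smult_r real_span_mat.smult by metis
qed

definition blkI :: "nat \<Rightarrow> complex mat \<Rightarrow> complex mat" where
  "blkI K M = mat K K (\<lambda>(i,j). (M $$ (i,j) + M $$ (i+K,j+K)) / 2)"
definition blkZ :: "nat \<Rightarrow> complex mat \<Rightarrow> complex mat" where
  "blkZ K M = mat K K (\<lambda>(i,j). (M $$ (i,j) - M $$ (i+K,j+K)) / 2)"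
definition blkX :: "nat \<Rightarrow> complex mat \<Rightarrow> complex mat" where
  "blkX K M = mat K K (\<lambda>(i,j). (M $$ (i,j+K) + M $$ (i+K,j)) / 2)"
definition blkY :: "nat \<Rightarrow> complex mat \<Rightarrow> complex mat" where
  "blkY K M = mat K K (\<lambda>(i,j). \<i> * (M $$ (i,j+K) - M $$ (i+K,j)) / 2)"

lemma blk_carrier: "blkI K M \<in> carrier_mat K K" "blkZ K M \<in> carrier_mat K K"
   "blkX K M \<in> carrier_mat K K" "blkY K M \<in> carrier_mat K K"
  by (simp_all add: blkI_def blkZ_def blkX_def blkY_def)

lemma hi_idx: "\<not> (r::nat) < K \<Longrightarrow> r < 2*K \<Longrightarrow> r div K = 1 \<and> r mod K + K = r"
proof -
  assume a: "\<not> r < K" "r < 2*K"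
  define s where "s = r - K"
  have rs: "r = s + K" and sK: "s < K" using a unfolding s_def by auto
  show ?thesis unfolding rs using sK by simp
qed

lemma decomp: assumes M: "M \<in> carrier_mat (2*K) (2*K)"
  shows "M = kron (pauli_mat PI) (blkI K M) + kron (pauli_mat PX) (blkX K M)
           + kron (pauli_mat PY) (blkY K M) + kron (pauli_mat PZ) (blkZ K M)"
proof (rule eq_matI)
  fix r c assume r: "r < dim_row (kron (pauli_mat PI) (blkI K M) + kron (pauli_mat PX) (blkX K M)
           + kron (pauli_mat PY) (blkY K M) + kron (pauli_mat PZ) (blkZ K M))"
   and c: "c < dim_col (kron (pauli_mat PI) (blkI K M) + kron (pauli_mat PX) (blkX K M)
           + kron (pauli_mat PY) (blkY K M) + kron (pauli_mat PZ) (blkZ K M))"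
  have r2: "r < 2 * K" and c2: "c < 2 * K" using r c by (auto simp: blk_carrier[THEN carrier_matD(1)] blk_carrier[THEN carrier_matD(2)])
  have Kp: "K > 0" using r2 by (cases K) auto
  let ?rhs = "kron (pauli_mat PI) (blkI K M) + kron (pauli_mat PX) (blkX K M)
           + kron (pauli_mat PY) (blkY K M) + kron (pauli_mat PZ) (blkZ K M)"
  have e: "?rhs $$ (r,c) = pauli_mat PI $$ (r div K, c div K) * blkI K M $$ (r mod K, c mod K)
     + pauli_mat PX $$ (r div K, c div K) * blkX K M $$ (r mod K, c mod K)
     + pauli_mat PY $$ (r div K, c div K) * blkY K M $$ (r mod K, c mod K)
     + pauli_mat PZ $$ (r div K, c div K) * blkZ K M $$ (r mod K, c mod K)"
    using r2 c2 by (simp add: kron_index blk_carrier[THEN carrier_matD(1)] blk_carrier[THEN carrier_matD(2)])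
  have rc: "r mod K < K" "c mod K < K" using Kp by auto
  have ii: "\<i> * \<i> = -1" by simp
  show "M $$ (r, c) = ?rhs $$ (r, c)"
  proof (cases "r < K")
    case True note rt = True
    show ?thesis
    proof (cases "c < K")
      case True
      thus ?thesis unfolding e using rt rc by (simp add: blkI_def blkX_def blkY_def blkZ_def pauli_mat_def field_simps)
    next
      case False
      hence cK: "c div K = 1" "c mod K + K = c" using c2 hi_idx[of c K] by auto
      thus ?thesis unfolding e using rt rc by (simp add: blkI_def blkX_def blkY_def blkZ_def pauli_mat_def field_simps ii)
    qed
  next
    case False note rf = False
    hence rK: "r div K = 1" "r mod K + K = r" using r2 hi_idx[of r K] by auto
    show ?thesis
    proof (cases "c < K")
      case True
      thus ?thesis unfolding e using rK rc by (simp add: blkI_def blkX_def blkY_def blkZ_def pauli_mat_def field_simps ii)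
    next
      case False
      hence cK: "c div K = 1" "c mod K + K = c" using c2 hi_idx[of c K] by auto
      thus ?thesis unfolding e using rK rc by (simp add: blkI_def blkX_def blkY_def blkZ_def pauli_mat_def field_simps)
    qed
  qed
qed (use M in \<open>auto simp: blk_carrier[THEN carrier_matD(1)] blk_carrier[THEN carrier_matD(2)]\<close>)



definition skew :: "nat \<Rightarrow> complex mat set" where
  "skew N = {A \<in> carrier_mat N N. ctrans A = - A}"

lemma skew_entry: assumes "A \<in> skew N" "i < N" "j < N" shows "cnj (A $$ (j,i)) = - A $$ (i,j)"
proof -
  have c: "A \<in> carrier_mat N N" and e: "ctrans A = - A" using assms unfolding skew_def by auto
  have "ctrans A $$ (i,j) = (- A) $$ (i,j)" using e by simp
  thus ?thesis using c assms by (simp add: ctrans_index)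
qed

lemma skewI: assumes c: "A \<in> carrier_mat N N" and e: "\<And>i j. i < N \<Longrightarrow> j < N \<Longrightarrow> cnj (A $$ (j,i)) = - A $$ (i,j)"
  shows "A \<in> skew N"
proof -
  have "ctrans A = - A" using c e by (intro eq_matI) (auto simp: ctrans_index)
  thus ?thesis using c unfolding skew_def by auto
qed

lemma su_skew: "A \<in> su N \<Longrightarrow> A \<in> skew N"
  unfolding su_def skew_def by auto

lemma blk_skew: assumes M: "M \<in> skew (2*K)"
  shows "blkI K M \<in> skew K" "blkZ K M \<in> skew K" "blkX K M \<in> skew K" "blkY K M \<in> skew K"
proof -
  have e: "cnj (M $$ (j,i)) = - M $$ (i,j)" if "i < 2*K" "j < 2*K" for i j using skew_entry[OF M that] .
  show "blkI K M \<in> skew K"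
    by (rule skewI[OF blk_carrier(1)]) (auto simp: blkI_def e field_simps)
  show "blkZ K M \<in> skew K"
    by (rule skewI[OF blk_carrier(2)]) (auto simp: blkZ_def e field_simps)
  show "blkX K M \<in> skew K"
    by (rule skewI[OF blk_carrier(3)]) (auto simp: blkX_def e field_simps)
  show "blkY K M \<in> skew K"
    by (rule skewI[OF blk_carrier(4)]) (auto simp: blkY_def e field_simps)
qed

lemma blkI_trace: assumes M: "M \<in> carrier_mat (2*K) (2*K)"
  shows "mtrace (blkI K M) = mtrace M / 2"
proof -
  have "mtrace M = (\<Sum>i = 0..<2*K. M $$ (i,i))" using M unfolding mtrace_def by (simp add: atLeast0LessThan)
  also have "\<dots> = (\<Sum>i = 0..<K. M $$ (i,i)) + (\<Sum>i = 0..<K. M $$ (i+K,i+K))" by (rule sum_split2)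
  also have "\<dots> = 2 * (\<Sum>i = 0..<K. (M $$ (i,i) + M $$ (i+K,i+K)) / 2)"
    by (simp add: sum.distrib sum_divide_distrib[symmetric])
  also have "(\<Sum>i = 0..<K. (M $$ (i,i) + M $$ (i+K,i+K)) / 2) = mtrace (blkI K M)"
    unfolding mtrace_def blkI_def by (simp add: atLeast0LessThan)
  finally show ?thesis by simp
qed

lemma SK_span: "M \<in> skew (2^m) \<Longrightarrow> M \<in> real_span_mat (2^m) (SKs m)"
proof (induction m arbitrary: M)
  case 0
  have c: "M \<in> carrier_mat 1 1" using 0 unfolding skew_def by simp
  have e: "cnj (M $$ (0,0)) = - M $$ (0,0)" using skew_entry[OF 0] by simp
  have re: "Re (M $$ (0,0)) = 0" using arg_cong[OF e, of Re] by simp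
  have "M = complex_of_real (Im (M $$ (0,0))) \<cdot>\<^sub>m (\<i> \<cdot>\<^sub>m pstring_mat [])"
  proof (rule eq_matI)
    fix i j assume "i < dim_row (complex_of_real (Im (M $$ (0,0))) \<cdot>\<^sub>m (\<i> \<cdot>\<^sub>m pstring_mat []))"
      "j < dim_col (complex_of_real (Im (M $$ (0,0))) \<cdot>\<^sub>m (\<i> \<cdot>\<^sub>m pstring_mat []))"
    hence ij: "i = 0" "j = 0" by (auto simp: pstring_Nil)
    show "M $$ (i,j) = (complex_of_real (Im (M $$ (0,0))) \<cdot>\<^sub>m (\<i> \<cdot>\<^sub>m pstring_mat [])) $$ (i,j)"
      unfolding ij using re by (simp add: pstring_Nil complex_eq_iff)
  qed (use c in \<open>auto simp: pstring_Nil\<close>)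
  moreover have "\<i> \<cdot>\<^sub>m pstring_mat [] \<in> SKs 0" unfolding SKs_def by auto
  ultimately show ?case by (metis power_0 real_span_mat.gen real_span_mat.smult)
next
  case (Suc m)
  let ?K = "2^m :: nat"
  have M: "M \<in> skew (2 * ?K)" using Suc.prems by simp
  have Mc: "M \<in> carrier_mat (2 * ?K) (2 * ?K)" using M unfolding skew_def by auto
  have T: "kron (pauli_mat p) s \<in> SKs (Suc m)" if "s \<in> SKs m" for p s
    using that unfolding SKs_def by (auto simp: kron_pstring)
  have sp: "kron (pauli_mat p) (B ?K M) \<in> real_span_mat (2 * ?K) (SKs (Suc m))"
    if "B ?K M \<in> skew ?K" for p B
    using kron_span[OF SKs_carrier T[where p=p]] Suc.IH[OF that] by blast
  have "M \<in> real_span_mat (2 * ?K) (SKs (Suc m))"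
    apply (subst decomp[OF Mc])
    apply (intro real_span_mat.add sp)
    using blk_skew[OF M] by auto
  thus ?case by simp
qed

lemma SU_span: "M \<in> su (2^m) \<Longrightarrow> M \<in> real_span_mat (2^m) (SUs m)"
proof (induction m arbitrary: M)
  case 0
  have c: "M \<in> carrier_mat 1 1" and t: "mtrace M = 0" using 0 unfolding su_def by auto
  have "M $$ (0,0) = 0" using t c unfolding mtrace_def by simp
  hence "M = 0\<^sub>m 1 1" using c by (intro eq_matI) auto
  thus ?case using real_span_mat.zero by simp
next
  case (Suc m)
  let ?K = "2^m :: nat"
  have M: "M \<in> su (2 * ?K)" using Suc.prems by simp
  have Mc: "M \<in> carrier_mat (2 * ?K) (2 * ?K)" and Mt: "mtrace M = 0" using M unfolding su_def by auto
  have Ms: "M \<in> skew (2 * ?K)" using su_skew[OF M] .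
  have T: "kron (pauli_mat p) s \<in> SUs (Suc m)" if "s \<in> SKs m" "p \<noteq> PI" for p s
    using that unfolding SKs_def SUs_def by (auto simp: kron_pstring)
  have TI: "kron (pauli_mat PI) s \<in> SUs (Suc m)" if "s \<in> SUs m" for s
    using that unfolding SUs_def by (auto simp: kron_pstring)
  have sp: "kron (pauli_mat p) (B ?K M) \<in> real_span_mat (2 * ?K) (SUs (Suc m))"
    if "B ?K M \<in> skew ?K" "p \<noteq> PI" for p B
    using kron_span[OF SKs_carrier T[OF _ that(2)]] SK_span[OF that(1)] by blast
  have bI: "blkI ?K M \<in> su ?K"
    using blk_skew(1)[OF Ms] blkI_trace[OF Mc] Mt unfolding su_def skew_def by auto
  have spI: "kron (pauli_mat PI) (blkI ?K M) \<in> real_span_mat (2 * ?K) (SUs (Suc m))"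
    using kron_span[OF SUs_carrier TI] Suc.IH[OF bI] by blast
  have x: "kron (pauli_mat PX) (blkX ?K M) \<in> real_span_mat (2 * ?K) (SUs (Suc m))"
    using sp[of blkX PX] blk_skew[OF Ms] by simp
  have y: "kron (pauli_mat PY) (blkY ?K M) \<in> real_span_mat (2 * ?K) (SUs (Suc m))"
    using sp[of blkY PY] blk_skew[OF Ms] by simp
  have z: "kron (pauli_mat PZ) (blkZ ?K M) \<in> real_span_mat (2 * ?K) (SUs (Suc m))"
    using sp[of blkZ PZ] blk_skew[OF Ms] by simp
  have "M \<in> real_span_mat (2 * ?K) (SUs (Suc m))"
    by (subst decomp[OF Mc]) (intro real_span_mat.add spI x y z)
  thus ?case by simp
qed



definition fB :: "nat \<Rightarrow> complex mat \<Rightarrow> complex mat" where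
  "fB K A = mat K K (\<lambda>(i,j). A $$ (i,j) + A $$ (i,j+K))"
definition fC :: "nat \<Rightarrow> complex mat \<Rightarrow> complex mat" where
  "fC K A = mat K K (\<lambda>(i,j). A $$ (i,j) - A $$ (i,j+K))"

definition blk :: "nat \<Rightarrow> complex mat \<Rightarrow> bool" where
  "blk K A \<longleftrightarrow> A \<in> carrier_mat (2*K) (2*K) \<and>
     (\<forall>i<K. \<forall>j<K. A $$ (i+K,j+K) = A $$ (i,j) \<and> A $$ (i+K,j) = A $$ (i,j+K))"

lemma fB_carrier: "fB K A \<in> carrier_mat K K" and fC_carrier: "fC K A \<in> carrier_mat K K"
  by (simp_all add: fB_def fC_def)

lemma fB_index: "i < K \<Longrightarrow> j < K \<Longrightarrow> fB K A $$ (i,j) = A $$ (i,j) + A $$ (i,j+K)"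
  by (simp add: fB_def)
lemma fC_index: "i < K \<Longrightarrow> j < K \<Longrightarrow> fC K A $$ (i,j) = A $$ (i,j) - A $$ (i,j+K)"
  by (simp add: fC_def)

lemma f_add: assumes "A \<in> carrier_mat (2*K) (2*K)" "B \<in> carrier_mat (2*K) (2*K)"
  shows "fB K (A + B) = fB K A + fB K B" "fC K (A + B) = fC K A + fC K B"
  using assms by (auto intro!: eq_matI simp: fB_index fC_index fB_carrier[THEN carrier_matD(1)] fB_carrier[THEN carrier_matD(2)]
      fC_carrier[THEN carrier_matD(1)] fC_carrier[THEN carrier_matD(2)])

lemma f_minus: assumes "A \<in> carrier_mat (2*K) (2*K)" "B \<in> carrier_mat (2*K) (2*K)"
  shows "fB K (A - B) = fB K A - fB K B" "fC K (A - B) = fC K A - fC K B"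
  using assms by (auto intro!: eq_matI simp: fB_index fC_index fB_carrier[THEN carrier_matD(1)] fB_carrier[THEN carrier_matD(2)]
      fC_carrier[THEN carrier_matD(1)] fC_carrier[THEN carrier_matD(2)])

lemma f_smult: assumes "A \<in> carrier_mat (2*K) (2*K)"
  shows "fB K (c \<cdot>\<^sub>m A) = c \<cdot>\<^sub>m fB K A" "fC K (c \<cdot>\<^sub>m A) = c \<cdot>\<^sub>m fC K A"
  using assms by (auto intro!: eq_matI simp: fB_index fC_index fB_carrier[THEN carrier_matD(1)] fB_carrier[THEN carrier_matD(2)]
      fC_carrier[THEN carrier_matD(1)] fC_carrier[THEN carrier_matD(2)] algebra_simps)

lemma f_zero: "fB K (0\<^sub>m (2*K) (2*K)) = 0\<^sub>m K K" "fC K (0\<^sub>m (2*K) (2*K)) = 0\<^sub>m K K"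
  by (auto intro!: eq_matI simp: fB_index fC_index fB_carrier[THEN carrier_matD(1)] fB_carrier[THEN carrier_matD(2)]
      fC_carrier[THEN carrier_matD(1)] fC_carrier[THEN carrier_matD(2)])

lemma blk_carrierD: "blk K A \<Longrightarrow> A \<in> carrier_mat (2*K) (2*K)"
  by (simp add: blk_def)

lemma prod_entries:
  assumes A: "blk K A" and A': "blk K A'" and i: "i < K" and j: "j < K"
  shows "(A * A') $$ (i,j) = (\<Sum>k = 0..<K. A $$ (i,k) * A' $$ (k,j) + A $$ (i,k+K) * A' $$ (k,j+K))"
    "(A * A') $$ (i,j+K) = (\<Sum>k = 0..<K. A $$ (i,k) * A' $$ (k,j+K) + A $$ (i,k+K) * A' $$ (k,j))"
proof -
  have Ac: "A \<in> carrier_mat (2*K) (2*K)" and A'c: "A' \<in> carrier_mat (2*K) (2*K)" using A A' by (auto simp: blk_def)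
  have i2: "i < 2*K" and j2: "j < 2*K" "j + K < 2*K" using i j by auto
  have s1: "A' $$ (k+K, j) = A' $$ (k, j+K)" "A' $$ (k+K, j+K) = A' $$ (k, j)" if "k < K" for k
    using A' that j unfolding blk_def by auto
  show "(A * A') $$ (i,j) = (\<Sum>k = 0..<K. A $$ (i,k) * A' $$ (k,j) + A $$ (i,k+K) * A' $$ (k,j+K))"
    unfolding mult_entry[OF Ac A'c i2 j2(1)] sum_split2 sum.distrib[symmetric]
    by (rule sum.cong) (auto simp: s1)
  show "(A * A') $$ (i,j+K) = (\<Sum>k = 0..<K. A $$ (i,k) * A' $$ (k,j+K) + A $$ (i,k+K) * A' $$ (k,j))"
    unfolding mult_entry[OF Ac A'c i2 j2(2)] sum_split2 sum.distrib[symmetric]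
    by (rule sum.cong) (auto simp: s1)
qed

lemma f_mult: assumes A: "blk K A" and A': "blk K A'"
  shows "fB K (A * A') = fB K A * fB K A'" "fC K (A * A') = fC K A * fC K A'"
proof -
  show "fB K (A * A') = fB K A * fB K A'"
  proof (rule eq_matI)
    fix i j assume "i < dim_row (fB K A * fB K A')" "j < dim_col (fB K A * fB K A')"
    hence i: "i < K" and j: "j < K" by (simp_all add: fB_def)
    have "(fB K A * fB K A') $$ (i,j) = (\<Sum>k = 0..<K. fB K A $$ (i,k) * fB K A' $$ (k,j))"
      by (rule mult_entry[OF fB_carrier fB_carrier i j])
    also have "\<dots> = (\<Sum>k = 0..<K. (A $$ (i,k) + A $$ (i,k+K)) * (A' $$ (k,j) + A' $$ (k,j+K)))"
      using i j by (intro sum.cong) (auto simp: fB_index)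
    also have "\<dots> = (A * A') $$ (i,j) + (A * A') $$ (i,j+K)"
      unfolding prod_entries[OF A A' i j] sum.distrib[symmetric]
      by (rule sum.cong) (auto simp: algebra_simps)
    also have "\<dots> = fB K (A * A') $$ (i,j)" using i j by (simp add: fB_index)
    finally show "fB K (A * A') $$ (i,j) = (fB K A * fB K A') $$ (i,j)" by simp
  qed (simp_all add: fB_def)
  show "fC K (A * A') = fC K A * fC K A'"
  proof (rule eq_matI)
    fix i j assume "i < dim_row (fC K A * fC K A')" "j < dim_col (fC K A * fC K A')"
    hence i: "i < K" and j: "j < K" by (simp_all add: fC_def)
    have "(fC K A * fC K A') $$ (i,j) = (\<Sum>k = 0..<K. fC K A $$ (i,k) * fC K A' $$ (k,j))"
      by (rule mult_entry[OF fC_carrier fC_carrier i j])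
    also have "\<dots> = (\<Sum>k = 0..<K. (A $$ (i,k) - A $$ (i,k+K)) * (A' $$ (k,j) - A' $$ (k,j+K)))"
      using i j by (intro sum.cong) (auto simp: fC_index)
    also have "\<dots> = (A * A') $$ (i,j) - (A * A') $$ (i,j+K)"
      unfolding prod_entries[OF A A' i j] sum_subtractf[symmetric]
      by (rule sum.cong) (auto simp: algebra_simps)
    also have "\<dots> = fC K (A * A') $$ (i,j)" using i j by (simp add: fC_index)
    finally show "fC K (A * A') $$ (i,j) = (fC K A * fC K A') $$ (i,j)" by simp
  qed (simp_all add: fC_def)
qed

lemma f_comm: assumes A: "blk K A" and A': "blk K A'"
  shows "fB K (comm A A') = comm (fB K A) (fB K A')" "fC K (comm A A') = comm (fC K A) (fC K A')"
proof -
  have Ac: "A \<in> carrier_mat (2*K) (2*K)" and A'c: "A' \<in> carrier_mat (2*K) (2*K)" using A A' by (auto simp: blk_def)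
  have c: "A * A' \<in> carrier_mat (2*K) (2*K)" "A' * A \<in> carrier_mat (2*K) (2*K)" using Ac A'c by auto
  show "fB K (comm A A') = comm (fB K A) (fB K A')"
    unfolding comm_def f_minus[OF c] f_mult[OF A A'] f_mult[OF A' A] ..
  show "fC K (comm A A') = comm (fC K A) (fC K A')"
    unfolding comm_def f_minus[OF c] f_mult[OF A A'] f_mult[OF A' A] ..
qed

lemma lin2: assumes h1: "x + y = u + v" and h2: "x - y = u - (v::complex)" shows "x = u \<and> y = v"
proof -
  have "(x + y) + (x - y) = (u + v) + (u - v)" using h1 h2 by simp
  hence "2 * x = 2 * u" by (simp add: algebra_simps mult_2)
  hence xu: "x = u" by simp
  thus ?thesis using h1 by simp
qed

lemma hi_idx2: "\<not> (r::nat) < K \<Longrightarrow> r < 2*K \<Longrightarrow> \<exists>i. r = i + K \<and> i < K"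
  by (rule exI[of _ "r - K"]) auto

lemma blk_inj: assumes A: "blk K A" and B: "blk K B" and e1: "fB K A = fB K B" and e2: "fC K A = fC K B"
  shows "A = B"
proof -
  have Ac: "A \<in> carrier_mat (2*K) (2*K)" and Bc: "B \<in> carrier_mat (2*K) (2*K)" using A B by (auto simp: blk_def)
  have top: "A $$ (i,j) = B $$ (i,j) \<and> A $$ (i,j+K) = B $$ (i,j+K)" if "i < K" "j < K" for i j
  proof -
    have "fB K A $$ (i,j) = fB K B $$ (i,j)" "fC K A $$ (i,j) = fC K B $$ (i,j)" using e1 e2 by simp_all
    hence "A $$ (i,j) + A $$ (i,j+K) = B $$ (i,j) + B $$ (i,j+K)"
      "A $$ (i,j) - A $$ (i,j+K) = B $$ (i,j) - B $$ (i,j+K)" using that by (simp_all add: fB_index fC_index)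
    thus ?thesis by (rule lin2)
  qed
  show ?thesis
  proof (rule eq_matI)
    fix r c assume r: "r < dim_row B" and c: "c < dim_col B"
    have r2: "r < 2*K" and c2: "c < 2*K" using r c Bc by auto
    show "A $$ (r,c) = B $$ (r,c)"
    proof (cases "r < K")
      case True
      thus ?thesis
      proof (cases "c < K")
        case True thus ?thesis using top \<open>r < K\<close> by simp
      next
        case False
        then obtain j where "c = j + K" "j < K" using c2 hi_idx2 by blast
        thus ?thesis using top \<open>r < K\<close> by simp
      qed
    next
      case False
      then obtain i where ri: "r = i + K" "i < K" using r2 hi_idx2 by blast
      thus ?thesis
      proof (cases "c < K")
        case True thus ?thesis using top ri A B unfolding blk_def by auto
      next
        case False
        then obtain j where "c = j + K" "j < K" using c2 hi_idx2 by blast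
        thus ?thesis using top ri A B unfolding blk_def by auto
      qed
    qed
  qed (use Ac Bc in auto)
qed



lemma ent: assumes r: "r < 2 * 2^length ps" and c: "c < 2 * 2^length ps"
  shows "pstring_mat (a # ps) $$ (r,c)
     = pauli_mat a $$ (r div 2^length ps, c div 2^length ps) * pstring_mat ps $$ (r mod 2^length ps, c mod 2^length ps)"
  using r c by (simp add: pstring_Cons kron_index)

lemma gen_props: assumes a: "a \<in> {PI, PX}"
  shows "blk (2^length ps) (\<i> \<cdot>\<^sub>m pstring_mat (a # ps))"
    "fB (2^length ps) (\<i> \<cdot>\<^sub>m pstring_mat (a # ps)) = \<i> \<cdot>\<^sub>m pstring_mat ps"
    "fC (2^length ps) (\<i> \<cdot>\<^sub>m pstring_mat (a # ps)) = complex_of_real (if a = PI then 1 else -1) \<cdot>\<^sub>m (\<i> \<cdot>\<^sub>m pstring_mat ps)"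
proof -
  let ?K = "2^length ps :: nat"
  have d1: "i < ?K \<Longrightarrow> (i + ?K) div ?K = 1" for i by simp
  have d2: "i < ?K \<Longrightarrow> (i + ?K) mod ?K = i" for i by simp
  have d3: "i < ?K \<Longrightarrow> i div ?K = 0" for i by simp
  have d4: "i < ?K \<Longrightarrow> i mod ?K = i" for i by simp
  have car: "\<i> \<cdot>\<^sub>m pstring_mat (a # ps) \<in> carrier_mat (2 * ?K) (2 * ?K)"
    using pstring_carrier[of "a # ps"] by simp
  have lt: "i < ?K \<Longrightarrow> i < 2 * ?K" "i < ?K \<Longrightarrow> i + ?K < 2 * ?K" for i by auto
  show "blk ?K (\<i> \<cdot>\<^sub>m pstring_mat (a # ps))"
    unfolding blk_def using car a
    by (auto simp: ent lt d1 d2 d3 d4 pauli_mat_def)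
  show "fB ?K (\<i> \<cdot>\<^sub>m pstring_mat (a # ps)) = \<i> \<cdot>\<^sub>m pstring_mat ps"
    using a by (intro eq_matI) (auto simp: fB_index ent lt d1 d2 d3 d4 pauli_mat_def fB_def)
  show "fC ?K (\<i> \<cdot>\<^sub>m pstring_mat (a # ps)) = complex_of_real (if a = PI then 1 else -1) \<cdot>\<^sub>m (\<i> \<cdot>\<^sub>m pstring_mat ps)"
    using a by (intro eq_matI) (auto simp: fC_index ent lt d1 d2 d3 d4 pauli_mat_def fC_def)
qed



lemma TT_Suc_split: assumes "ps \<in> TT (Suc m)"
  obtains a ps' where "ps = a # ps'" "a \<in> {PI, PX}" "length ps' = m" "ps' \<noteq> replicate m PI"
proof -
  obtain a ps' where ps: "ps = a # ps'" using assms unfolding TT_def by (cases ps) auto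
  have "a \<in> {PI, PX}" "length ps' = m" using assms unfolding TT_def ps by auto
  moreover have "ps' \<noteq> replicate m PI" using assms \<open>a \<in> {PI, PX}\<close> unfolding TT_def ps by auto
  ultimately show ?thesis using that ps by blast
qed

lemma span_props: assumes x: "x \<in> real_span_mat (2^Suc m) (SS (Suc m))"
  shows "blk (2^m) x \<and> fB (2^m) x \<in> su (2^m) \<and> fC (2^m) x \<in> su (2^m)"
  using x
proof (induction rule: real_span_mat.induct)
  case (gen x)
  then obtain ps where ps: "ps \<in> TT (Suc m)" "x = \<i> \<cdot>\<^sub>m pstring_mat ps" unfolding SS_def by blast
  obtain a ps' where p: "ps = a # ps'" "a \<in> {PI, PX}" "length ps' = m" "ps' \<noteq> replicate m PI"
    using TT_Suc_split[OF ps(1)] by blast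
  have s: "\<i> \<cdot>\<^sub>m pstring_mat ps' \<in> su (2^m)" using pstring_su[of ps'] p by simp
  show ?case using gen_props[OF p(2), of ps'] p ps s su_smult[OF s] by simp
next
  case zero
  have z: "0\<^sub>m (2^Suc m) (2^Suc m) = (0\<^sub>m (2 * 2^m) (2 * 2^m) :: complex mat)" by simp
  show ?case unfolding z f_zero using su_zero unfolding blk_def by auto
next
  case (add x y)
  have c: "x \<in> carrier_mat (2 * 2^m) (2 * 2^m)" "y \<in> carrier_mat (2 * 2^m) (2 * 2^m)"
    using add by (auto simp: blk_def)
  have "blk (2^m) (x + y)" using add c unfolding blk_def by auto
  thus ?case using add f_add[OF c] su_add by simp
next
  case (smult x r)
  have c: "x \<in> carrier_mat (2 * 2^m) (2 * 2^m)" using smult by (auto simp: blk_def)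
  have "blk (2^m) (complex_of_real r \<cdot>\<^sub>m x)" using smult c unfolding blk_def by auto
  thus ?case using smult f_smult[OF c] su_smult by simp
qed

lemma surj: assumes U: "U \<in> su (2^m)" and V: "V \<in> su (2^m)"
  shows "\<exists>A \<in> real_span_mat (2^Suc m) (SS (Suc m)). fB (2^m) A = U \<and> fC (2^m) A = V"
proof -
  let ?K = "2^m :: nat"
  define W1 where "W1 = complex_of_real (1/2) \<cdot>\<^sub>m (U + V)"
  define W2 where "W2 = complex_of_real (1/2) \<cdot>\<^sub>m (U + complex_of_real (-1) \<cdot>\<^sub>m V)"
  have Uc: "U \<in> carrier_mat ?K ?K" and Vc: "V \<in> carrier_mat ?K ?K" using U V unfolding su_def by auto
  have Us: "U \<in> real_span_mat ?K (SUs m)" and Vs: "V \<in> real_span_mat ?K (SUs m)"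
    using SU_span U V by auto
  have W1s: "W1 \<in> real_span_mat ?K (SUs m)" unfolding W1_def
    by (intro real_span_mat.smult real_span_mat.add Us Vs)
  have W2s: "W2 \<in> real_span_mat ?K (SUs m)" unfolding W2_def
    by (intro real_span_mat.smult real_span_mat.add Us Vs)
  have T: "kron (pauli_mat p) s \<in> SS (Suc m)" if sS: "s \<in> SUs m" and pp: "p \<in> {PI, PX}" for p s
  proof -
    obtain ps where ps: "s = \<i> \<cdot>\<^sub>m pstring_mat ps" "length ps = m" "ps \<noteq> replicate m PI"
      using sS unfolding SUs_def by blast
    have "p # ps \<in> TT (Suc m)" using ps pp unfolding TT_def by auto
    thus ?thesis unfolding SS_def ps(1) kron_pstring by blast
  qed
  have k1: "kron (pauli_mat PI) W1 \<in> real_span_mat (2 * ?K) (SS (Suc m))"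
    using kron_span[OF SUs_carrier T[where p=PI]] W1s by auto
  have k2: "kron (pauli_mat PX) W2 \<in> real_span_mat (2 * ?K) (SS (Suc m))"
    using kron_span[OF SUs_carrier T[where p=PX]] W2s by auto
  define A where "A = kron (pauli_mat PI) W1 + kron (pauli_mat PX) W2"
  have As: "A \<in> real_span_mat (2^Suc m) (SS (Suc m))" unfolding A_def using k1 k2 real_span_mat.add by simp
  have W1c: "W1 \<in> carrier_mat ?K ?K" and W2c: "W2 \<in> carrier_mat ?K ?K" unfolding W1_def W2_def using Uc Vc by auto
  have Ae: "A $$ (i,j) = W1 $$ (i,j)" "A $$ (i,j+?K) = W2 $$ (i,j)" if "i < ?K" "j < ?K" for i j
    using that W1c W2c unfolding A_def by (auto simp: kron_index pauli_mat_def)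
  have "fB ?K A = U"
  proof (rule eq_matI)
    fix i j assume "i < dim_row U" "j < dim_col U"
    hence ij: "i < ?K" "j < ?K" using Uc by auto
    have "fB ?K A $$ (i,j) = W1 $$ (i,j) + W2 $$ (i,j)" using ij Ae by (simp add: fB_index)
    also have "\<dots> = U $$ (i,j)" unfolding W1_def W2_def using ij Uc Vc by (simp add: field_simps)
    finally show "fB ?K A $$ (i,j) = U $$ (i,j)" .
  qed (use Uc in \<open>auto simp: fB_def\<close>)
  moreover have "fC ?K A = V"
  proof (rule eq_matI)
    fix i j assume "i < dim_row V" "j < dim_col V"
    hence ij: "i < ?K" "j < ?K" using Vc by auto
    have "fC ?K A $$ (i,j) = W1 $$ (i,j) - W2 $$ (i,j)" using ij Ae by (simp add: fC_index)
    also have "\<dots> = V $$ (i,j)" unfolding W1_def W2_def using ij Uc Vc by (simp add: field_simps)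
    finally show "fC ?K A $$ (i,j) = V $$ (i,j)" .
  qed (use Vc in \<open>auto simp: fC_def\<close>)
  ultimately show ?thesis using As by blast
qed



lemma set_eq: "{\<i> \<cdot>\<^sub>m pstring_mat ps | ps. length ps = n \<and> hd ps \<in> {PI, PX}
               \<and> ps \<noteq> replicate n PI \<and> ps \<noteq> PX # replicate (n - 1) PI} = SS n"
  unfolding SS_def TT_def by blast

lemma iso: assumes n: "n = Suc m" and m: "m \<ge> 1"
  shows "lie_iso_sum (\<lambda>A. (fB (2^m) A, fC (2^m) A)) (a15 n) (su (2^m)) (su (2^m))"
proof -
  let ?K = "2^m :: nat"
  let ?f = "\<lambda>A. (fB ?K A, fC ?K A)"
  have L: "a15 n = real_span_mat (2^Suc m) (SS (Suc m))" using a15_eq[of n] n m by simp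
  have P: "x \<in> a15 n \<Longrightarrow> blk ?K x \<and> fB ?K x \<in> su ?K \<and> fC ?K x \<in> su ?K" for x
    using span_props L by simp
  have C: "x \<in> a15 n \<Longrightarrow> x \<in> carrier_mat (2 * ?K) (2 * ?K)" for x using P blk_carrierD by blast
  have inj: "inj_on ?f (a15 n)"
  proof (rule inj_onI)
    fix x y assume x: "x \<in> a15 n" and y: "y \<in> a15 n" and e: "?f x = ?f y"
    have b: "blk ?K x" "blk ?K y" using P[OF x] P[OF y] by auto
    show "x = y" using blk_inj[OF b] e by simp
  qed
  have img: "?f ` (a15 n) = su ?K \<times> su ?K"
  proof
    show "?f ` a15 n \<subseteq> su ?K \<times> su ?K" using P by auto
    show "su ?K \<times> su ?K \<subseteq> ?f ` a15 n"
    proof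
      fix p assume "p \<in> su ?K \<times> su ?K"
      then obtain U V where p: "p = (U, V)" "U \<in> su ?K" "V \<in> su ?K" by auto
      obtain A where A: "A \<in> real_span_mat (2^Suc m) (SS (Suc m))" "fB ?K A = U" "fC ?K A = V"
        using surj[OF p(2,3)] by blast
      show "p \<in> ?f ` a15 n" using A p L by (auto intro!: image_eqI[of _ _ A])
    qed
  qed
  have add: "\<forall>x\<in>a15 n. \<forall>y\<in>a15 n. ?f (x + y) = (fst (?f x) + fst (?f y), snd (?f x) + snd (?f y))"
    using C f_add by simp
  have sm: "\<forall>x\<in>a15 n. \<forall>r::real. ?f (complex_of_real r \<cdot>\<^sub>m x)
            = (complex_of_real r \<cdot>\<^sub>m fst (?f x), complex_of_real r \<cdot>\<^sub>m snd (?f x))"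
    using C f_smult by simp
  have cm: "\<forall>x\<in>a15 n. \<forall>y\<in>a15 n. ?f (comm x y) = (comm (fst (?f x)) (fst (?f y)), comm (snd (?f x)) (snd (?f y)))"
    using P f_comm by simp
  show ?thesis unfolding lie_iso_sum_def bij_betw_def using inj img add sm cm by blast
qed

theorem mainTheorem17:
  fixes n :: nat
  assumes "n \<ge> 3"
  shows "a15 n = real_span_mat (2^n)
           {\<i> \<cdot>\<^sub>m pstring_mat ps | ps. length ps = n \<and> hd ps \<in> {PI, PX}
               \<and> ps \<noteq> replicate n PI \<and> ps \<noteq> PX # replicate (n - 1) PI}
         \<and> (\<exists>f. lie_iso_sum f (a15 n) (su (2^(n-1))) (su (2^(n-1))))"
proof
  show "a15 n = real_span_mat (2^n)
           {\<i> \<cdot>\<^sub>m pstring_mat ps | ps. length ps = n \<and> hd ps \<in> {PI, PX}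
               \<and> ps \<noteq> replicate n PI \<and> ps \<noteq> PX # replicate (n - 1) PI}"
    unfolding set_eq using a15_eq assms by simp
  obtain m where n: "n = Suc m" using assms by (cases n) auto
  have m: "m \<ge> 1" using assms n by simp
  show "\<exists>f. lie_iso_sum f (a15 n) (su (2^(n-1))) (su (2^(n-1)))"
    using iso[OF n m] n by auto
qed


end
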